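(* Let $\Phi$ be an irreducible reduced root system with basis $\Delta$. Let $\alpha,\beta$ be long roots with $\alpha\le\beta$. Write $\beta=\sum_{\sigma\in J}n_\sigma\sigma$ and $\alpha=\sum_{\tau\in K}m_\tau\tau$ where $J,K$ are non-empty subsets of $\Delta$ and the $n_\sigma$ (resp. $m_\tau$) are non-zero integers all of the same sign. Then: (i) if $0<\alpha\le\beta$, there is a simple path from $\beta$ to $\alpha$; (ii) if $\alpha<0<\beta$, there is a simple path from $\beta$ to $\alpha$ if and only if some long simple root belongs to both $J$ and $K$; and there is a path from $\beta$ to $\alpha$ if and only if there exist a long root $\sigma\in J$ and a long root $\tau\in K$ with $(\sigma|\tau)\neq0$; (iii) if $\alpha\le\beta<0$, there is a simple path from $\beta$ to $\alpha$.
   Context: $(\cdot|\cdot)$ is a $W$-invariant scalar product with minimal squared root length $1$, maximal squared root length $r$; long roots have squared length $r$; $\Delta_{\mathrm{lg}},\Delta_{\mathrm{sh}}$ are the long and short simple roots. For $x,y$ in the ambient space, $y\le x$ means $x-y$ is a non-negative combination of simple roots. For a long root $\gamma=\sum_{\delta\in\Delta}n_\delta\delta$, $\mathrm{ht}^\vee(\gamma)=\sum_{\delta\in\Delta_{\mathrm{lg}}}n_\delta+\frac1r\sum_{\delta\in\Delta_{\mathrm{sh}}}n_\delta$; $\tilde\alpha$ is the highest root. Level of a long root: $L(\gamma)=\mathrm{ht}^\vee(\tilde\alpha)-\mathrm{ht}^\vee(\gamma)$ if $\gamma>0$, and $L(\gamma)=\mathrm{ht}^\vee(\tilde\alpha)-\mathrm{ht}^\vee(\gamma)-1$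 if $\gamma<0$. For long roots $\beta',\alpha'$ and a positive root $\gamma$, $\beta'\xrightarrow{\gamma}\alpha'$ means $\alpha'=s_\gamma(\beta')$ and $L(\alpha')=L(\beta')+1$. A path from $\beta$ to $\alpha$ is a sequence of long roots $\beta=\beta_0\xrightarrow{\gamma_1}\beta_1\cdots\xrightarrow{\gamma_k}\beta_k=\alpha$ with positive roots $\gamma_i$; it is a simple path if all $\gamma_i$ are simple roots. *)

theory Defs
  imports "HOL-Analysis.Analysis"
begin

definition rs_refl :: "'a::euclidean_space \<Rightarrow> 'a \<Rightarrow> 'a" where
  "rs_refl \<gamma> x = x - (2 * (x \<bullet> \<gamma>) / (\<gamma> \<bullet> \<gamma>)) *\<^sub>R \<gamma>"

definition root_system :: "'a::euclidean_space set \<Rightarrow> bool" where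
  "root_system \<Phi> \<longleftrightarrow> finite \<Phi> \<and> 0 \<notin> \<Phi> \<and> span \<Phi> = UNIV \<and>
     (\<forall>\<alpha>\<in>\<Phi>. \<forall>\<beta>\<in>\<Phi>. rs_refl \<alpha> \<beta> \<in> \<Phi>) \<and>
     (\<forall>\<alpha>\<in>\<Phi>. \<forall>\<beta>\<in>\<Phi>. 2 * (\<beta> \<bullet> \<alpha>) / (\<alpha> \<bullet> \<alpha>) \<in> \<int>)"

definition rs_reduced :: "'a::euclidean_space set \<Rightarrow> bool" where
  "rs_reduced \<Phi> \<longleftrightarrow> (\<forall>\<alpha>\<in>\<Phi>. \<forall>c::real. c *\<^sub>R \<alpha> \<in> \<Phi> \<longrightarrow> c = 1 \<or> c = -1)"

definition irreducible_rs :: "'a::euclidean_space set \<Rightarrow> bool" where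
  "irreducible_rs \<Phi> \<longleftrightarrow> \<Phi> \<noteq> {} \<and>
     \<not> (\<exists>A B. A \<noteq> {} \<and> B \<noteq> {} \<and> A \<union> B = \<Phi> \<and> A \<inter> B = {} \<and>
            (\<forall>a\<in>A. \<forall>b\<in>B. a \<bullet> b = 0))"

definition rs_basis :: "'a::euclidean_space set \<Rightarrow> 'a set \<Rightarrow> bool" where
  "rs_basis \<Phi> \<Delta> \<longleftrightarrow> \<Delta> \<subseteq> \<Phi> \<and> independent \<Delta> \<and>
     (\<forall>\<gamma>\<in>\<Phi>. \<exists>c::'a \<Rightarrow> int. \<gamma> = (\<Sum>\<delta>\<in>\<Delta>. of_int (c \<delta>) *\<^sub>R \<delta>) \<and>
        ((\<forall>\<delta>\<in>\<Delta>. c \<delta> \<ge> 0) \<or> (\<forall>\<delta>\<in>\<Delta>. c \<delta> \<le> 0)))"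

definition rle :: "'a::euclidean_space set \<Rightarrow> 'a \<Rightarrow> 'a \<Rightarrow> bool" where
  "rle \<Delta> y x \<longleftrightarrow> (\<exists>c::'a \<Rightarrow> real. (\<forall>\<delta>\<in>\<Delta>. c \<delta> \<ge> 0) \<and> x - y = (\<Sum>\<delta>\<in>\<Delta>. c \<delta> *\<^sub>R \<delta>))"

definition rless :: "'a::euclidean_space set \<Rightarrow> 'a \<Rightarrow> 'a \<Rightarrow> bool" where
  "rless \<Delta> y x \<longleftrightarrow> rle \<Delta> y x \<and> y \<noteq> x"

definition max_sq :: "'a::euclidean_space set \<Rightarrow> real" where
  "max_sq \<Phi> = Max ((\<lambda>\<gamma>. \<gamma> \<bullet> \<gamma>) ` \<Phi>)"

definition min_sq :: "'a::euclidean_space set \<Rightarrow> real" where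
  "min_sq \<Phi> = Min ((\<lambda>\<gamma>. \<gamma> \<bullet> \<gamma>) ` \<Phi>)"

definition rr :: "'a::euclidean_space set \<Rightarrow> real" where
  "rr \<Phi> = max_sq \<Phi> / min_sq \<Phi>"

definition long :: "'a::euclidean_space set \<Rightarrow> 'a \<Rightarrow> bool" where
  "long \<Phi> \<gamma> \<longleftrightarrow> \<gamma> \<in> \<Phi> \<and> \<gamma> \<bullet> \<gamma> = max_sq \<Phi>"

definition positive_root :: "'a::euclidean_space set \<Rightarrow> 'a set \<Rightarrow> 'a \<Rightarrow> bool" where
  "positive_root \<Phi> \<Delta> \<gamma> \<longleftrightarrow> \<gamma> \<in> \<Phi> \<and> rless \<Delta> 0 \<gamma>"

definition htv :: "'a::euclidean_space set \<Rightarrow> 'a set \<Rightarrow> 'a \<Rightarrow> real" where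
  "htv \<Phi> \<Delta> \<gamma> = (\<Sum>\<delta>\<in>\<Delta>. (if long \<Phi> \<delta> then 1 else 1 / rr \<Phi>) * representation \<Delta> \<gamma> \<delta>)"

definition highest_root :: "'a::euclidean_space set \<Rightarrow> 'a set \<Rightarrow> 'a" where
  "highest_root \<Phi> \<Delta> = (THE \<gamma>. \<gamma> \<in> \<Phi> \<and> (\<forall>\<beta>\<in>\<Phi>. rle \<Delta> \<beta> \<gamma>))"

definition level :: "'a::euclidean_space set \<Rightarrow> 'a set \<Rightarrow> 'a \<Rightarrow> real" where
  "level \<Phi> \<Delta> \<gamma> =
     (if rless \<Delta> 0 \<gamma> then htv \<Phi> \<Delta> (highest_root \<Phi> \<Delta>) - htv \<Phi> \<Delta> \<gamma>
      else htv \<Phi> \<Delta> (highest_root \<Phi> \<Delta>) - htv \<Phi> \<Delta> \<gamma> - 1)"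

definition edge :: "'a::euclidean_space set \<Rightarrow> 'a set \<Rightarrow> 'a \<Rightarrow> 'a \<Rightarrow> 'a \<Rightarrow> bool" where
  "edge \<Phi> \<Delta> \<beta>' \<gamma> \<alpha>' \<longleftrightarrow> long \<Phi> \<beta>' \<and> long \<Phi> \<alpha>' \<and> positive_root \<Phi> \<Delta> \<gamma> \<and>
     \<alpha>' = rs_refl \<gamma> \<beta>' \<and> level \<Phi> \<Delta> \<alpha>' = level \<Phi> \<Delta> \<beta>' + 1"

definition path_in :: "'a::euclidean_space set \<Rightarrow> 'a set \<Rightarrow> 'a set \<Rightarrow> 'a \<Rightarrow> 'a \<Rightarrow> bool" where
  "path_in \<Phi> \<Delta> G \<beta> \<alpha> \<longleftrightarrow> (\<exists>bs gs. length bs = Suc (length gs) \<and> bs ! 0 = \<beta> \<and>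
       bs ! length gs = \<alpha> \<and> (\<forall>i \<le> length gs. long \<Phi> (bs ! i)) \<and> set gs \<subseteq> G \<and>
       (\<forall>i < length gs. edge \<Phi> \<Delta> (bs ! i) (gs ! i) (bs ! Suc i)))"

definition rpath :: "'a::euclidean_space set \<Rightarrow> 'a set \<Rightarrow> 'a \<Rightarrow> 'a \<Rightarrow> bool" where
  "rpath \<Phi> \<Delta> \<beta> \<alpha> \<longleftrightarrow> path_in \<Phi> \<Delta> \<Phi> \<beta> \<alpha>"

definition rs_simple_path :: "'a::euclidean_space set \<Rightarrow> 'a set \<Rightarrow> 'a \<Rightarrow> 'a \<Rightarrow> bool" where
  "rs_simple_path \<Phi> \<Delta> \<beta> \<alpha> \<longleftrightarrow> path_in \<Phi> \<Delta> \<Delta> \<beta> \<alpha>"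

end

theory Submission
  imports Defs
begin

locale RS =
  fixes \<Phi> \<Delta> :: "'a::euclidean_space set"
  assumes rs: "root_system \<Phi>" and red: "rs_reduced \<Phi>" and irr: "irreducible_rs \<Phi>"
    and bas: "rs_basis \<Phi> \<Delta>"
begin

definition c :: "'a \<Rightarrow> 'a \<Rightarrow> real" where "c x \<delta> = representation \<Delta> x \<delta>"
definition pos :: "'a \<Rightarrow> bool" where "pos x \<longleftrightarrow> rless \<Delta> 0 x"
definition cart :: "'a \<Rightarrow> 'a \<Rightarrow> real" where "cart x g = 2 * (x \<bullet> g) / (g \<bullet> g)"

lemma finPhi: "finite \<Phi>" and zPhi: "0 \<notin> \<Phi>" and spanPhi: "span \<Phi> = UNIV"
  and reflPhi: "a \<in> \<Phi> \<Longrightarrow> b \<in> \<Phi> \<Longrightarrow> rs_refl a b \<in> \<Phi>"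
  and intPhi: "a \<in> \<Phi> \<Longrightarrow> b \<in> \<Phi> \<Longrightarrow> cart b a \<in> \<int>"
  using rs unfolding root_system_def cart_def by auto

lemma DsubPhi: "\<Delta> \<subseteq> \<Phi>" and indD: "independent \<Delta>"
  using bas unfolding rs_basis_def by auto

lemma finD: "finite \<Delta>" using indD finiteI_independent by auto

lemma rootrep: "g \<in> \<Phi> \<Longrightarrow> \<exists>f::'a\<Rightarrow>int. g = (\<Sum>\<delta>\<in>\<Delta>. of_int (f \<delta>) *\<^sub>R \<delta>) \<and>
        ((\<forall>\<delta>\<in>\<Delta>. f \<delta> \<ge> 0) \<or> (\<forall>\<delta>\<in>\<Delta>. f \<delta> \<le> 0))"
  using bas unfolding rs_basis_def by auto

lemma spanD: "span \<Delta> = UNIV"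
proof -
  have "\<Phi> \<subseteq> span \<Delta>"
  proof
    fix g assume "g \<in> \<Phi>"
    then obtain f :: "'a \<Rightarrow> int" where "g = (\<Sum>\<delta>\<in>\<Delta>. of_int (f \<delta>) *\<^sub>R \<delta>)" using rootrep by blast
    then show "g \<in> span \<Delta>" by (simp add: span_sum span_scale span_base)
  qed
  then have "span \<Phi> \<subseteq> span \<Delta>" by (simp add: span_minimal)
  then show ?thesis using spanPhi by auto
qed

lemma inspan[simp]: "x \<in> span \<Delta>" using spanD by auto

lemma c_add: "c (x + y) d = c x d + c y d"
  unfolding c_def by (simp add: representation_add[OF indD])
lemma c_diff: "c (x - y) d = c x d - c y d"
  unfolding c_def by (simp add: representation_diff[OF indD])
lemma c_neg: "c (- x) d = - c x d"
  unfolding c_def by (simp add: representation_neg[OF indD])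
lemma c_scale: "c (a *\<^sub>R x) d = a * c x d"
  unfolding c_def by (simp add: representation_scale[OF indD])
lemma c_zero: "c 0 d = 0"
  unfolding c_def by (simp add: representation_zero)
lemma c_basis: "e \<in> \<Delta> \<Longrightarrow> c e d = (if d = e then 1 else 0)"
  unfolding c_def by (simp add: representation_basis[OF indD])
lemma c_out: "d \<notin> \<Delta> \<Longrightarrow> c x d = 0"
  unfolding c_def using representation_ne_zero by blast
lemma expand: "x = (\<Sum>\<delta>\<in>\<Delta>. c x \<delta> *\<^sub>R \<delta>)"
  unfolding c_def using sum_representation_eq[OF indD inspan finD] by simp

lemma c_sum: assumes "S \<subseteq> \<Delta>" shows "c (\<Sum>\<delta>\<in>S. f \<delta> *\<^sub>R \<delta>) d = (if d \<in> S then f d else 0)"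
proof -
  have fS: "finite S" using assms finD finite_subset by auto
  have "c (\<Sum>\<delta>\<in>S. f \<delta> *\<^sub>R \<delta>) d = (\<Sum>\<delta>\<in>S. f \<delta> * c \<delta> d)"
    unfolding c_def by (simp add: representation_sum[OF indD] representation_scale[OF indD])
  also have "\<dots> = (\<Sum>\<delta>\<in>S. if d = \<delta> then f \<delta> else 0)"
    using assms by (intro sum.cong) (auto simp: c_basis)
  also have "\<dots> = (if d \<in> S then f d else 0)" using fS by (simp add: sum.delta)
  finally show ?thesis .
qed

lemma c_eqI: "(\<And>d. d \<in> \<Delta> \<Longrightarrow> c x d = c y d) \<Longrightarrow> x = y"
  by (metis (no_types, lifting) expand sum.cong)

lemma root_int: "g \<in> \<Phi> \<Longrightarrow> c g d \<in> \<int>"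
proof -
  assume "g \<in> \<Phi>"
  then obtain f :: "'a \<Rightarrow> int" where f: "g = (\<Sum>\<delta>\<in>\<Delta>. of_int (f \<delta>) *\<^sub>R \<delta>)" using rootrep by blast
  show ?thesis by (subst f, subst c_sum) auto
qed

lemma root_sign: "g \<in> \<Phi> \<Longrightarrow> (\<forall>d\<in>\<Delta>. c g d \<ge> 0) \<or> (\<forall>d\<in>\<Delta>. c g d \<le> 0)"
proof -
  assume "g \<in> \<Phi>"
  then obtain f :: "'a \<Rightarrow> int" where f: "g = (\<Sum>\<delta>\<in>\<Delta>. of_int (f \<delta>) *\<^sub>R \<delta>)"
    and s: "(\<forall>\<delta>\<in>\<Delta>. f \<delta> \<ge> 0) \<or> (\<forall>\<delta>\<in>\<Delta>. f \<delta> \<le> 0)" using rootrep by blast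
  have "\<And>d. d \<in> \<Delta> \<Longrightarrow> c g d = of_int (f d)" by (subst f, subst c_sum) auto
  then show ?thesis using s by auto
qed

lemma rle_iff: "rle \<Delta> y x \<longleftrightarrow> (\<forall>d\<in>\<Delta>. c y d \<le> c x d)"
proof
  assume "rle \<Delta> y x"
  then obtain f where f: "\<forall>\<delta>\<in>\<Delta>. f \<delta> \<ge> 0" "x - y = (\<Sum>\<delta>\<in>\<Delta>. f \<delta> *\<^sub>R \<delta>)"
    unfolding rle_def by blast
  have "\<And>d. d \<in> \<Delta> \<Longrightarrow> c (x - y) d = f d" by (subst f(2), subst c_sum) auto
  then have "\<And>d. d \<in> \<Delta> \<Longrightarrow> c x d - c y d = f d" by (simp add: c_diff)
  then show "\<forall>d\<in>\<Delta>. c y d \<le> c x d" using f(1) by (metis diff_ge_0_iff_ge)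
next
  assume a: "\<forall>d\<in>\<Delta>. c y d \<le> c x d"
  have e: "x - y = (\<Sum>\<delta>\<in>\<Delta>. (c x \<delta> - c y \<delta>) *\<^sub>R \<delta>)" by (subst expand[of "x - y"]) (simp add: c_diff)
  show "rle \<Delta> y x" unfolding rle_def
    by (rule exI[of _ "\<lambda>\<delta>. c x \<delta> - c y \<delta>"]) (use e a in simp)
qed

lemma pos_iff: "pos x \<longleftrightarrow> (\<forall>d\<in>\<Delta>. 0 \<le> c x d) \<and> x \<noteq> 0"
  unfolding pos_def rless_def rle_iff by (auto simp: c_zero)

lemma neg_root: "g \<in> \<Phi> \<Longrightarrow> \<not> pos g \<Longrightarrow> (\<forall>d\<in>\<Delta>. c g d \<le> 0)"
  using root_sign[of g] zPhi pos_iff by fastforce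

lemma negPhi: "g \<in> \<Phi> \<Longrightarrow> - g \<in> \<Phi>"
proof -
  assume g: "g \<in> \<Phi>"
  have "g \<bullet> g \<noteq> 0" using g zPhi by auto
  then have "rs_refl g g = - g" unfolding rs_refl_def by (simp add: scaleR_2)
  then show ?thesis using reflPhi[OF g g] by simp
qed

lemma nonzero_c: "x \<noteq> 0 \<Longrightarrow> \<exists>d\<in>\<Delta>. c x d \<noteq> 0"
  using c_eqI[of x 0] by (auto simp: c_zero)

end

context RS begin

abbreviation "M \<equiv> max_sq \<Phi>"
abbreviation "m \<equiv> min_sq \<Phi>"

lemma Phi_ne: "\<Phi> \<noteq> {}" using irr unfolding irreducible_rs_def by auto

lemma len_bounds: "g \<in> \<Phi> \<Longrightarrow> m \<le> g \<bullet> g \<and> g \<bullet> g \<le> M"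
  unfolding max_sq_def min_sq_def using finPhi by auto

lemma len_pos: "g \<in> \<Phi> \<Longrightarrow> g \<bullet> g > 0" using zPhi by auto

lemma m_pos: "m > 0"
proof -
  have "m \<in> (\<lambda>g. g \<bullet> g) ` \<Phi>" unfolding min_sq_def using finPhi Phi_ne by (intro Min_in) auto
  then show ?thesis using len_pos by auto
qed

lemma ex_long: "\<exists>g. long \<Phi> g"
proof -
  have "M \<in> (\<lambda>g. g \<bullet> g) ` \<Phi>" unfolding max_sq_def using finPhi Phi_ne by (intro Max_in) auto
  then show ?thesis unfolding long_def by auto
qed

lemma ex_short: "\<exists>g\<in>\<Phi>. g \<bullet> g = m"
proof -
  have "m \<in> (\<lambda>g. g \<bullet> g) ` \<Phi>" unfolding min_sq_def using finPhi Phi_ne by (intro Min_in) auto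
  then show ?thesis by auto
qed

lemma M_pos: "M > 0"
proof -
  obtain g where "long \<Phi> g" using ex_long by auto
  then show ?thesis using len_pos[of g] unfolding long_def by auto
qed

lemma refl_eq: "rs_refl g x = x - cart x g *\<^sub>R g"
  unfolding rs_refl_def cart_def by simp

lemma refl_inner: "g \<noteq> 0 \<Longrightarrow> rs_refl g x \<bullet> rs_refl g y = x \<bullet> y"
proof -
  assume g: "g \<noteq> 0"
  have gg: "g \<bullet> g \<noteq> 0" using g by auto
  have "rs_refl g x \<bullet> rs_refl g y = x \<bullet> y - 2 * (y \<bullet> g) / (g \<bullet> g) * (x \<bullet> g)
     - 2 * (x \<bullet> g) / (g \<bullet> g) * (g \<bullet> y) + 2 * (x \<bullet> g) / (g \<bullet> g) * (2 * (y \<bullet> g) / (g \<bullet> g)) * (g \<bullet> g)"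
    unfolding rs_refl_def by (simp add: inner_diff_left inner_diff_right algebra_simps)
  also have "\<dots> = x \<bullet> y" using gg by (simp add: field_simps inner_commute)
  finally show ?thesis .
qed

lemma refl_invol: "g \<noteq> 0 \<Longrightarrow> rs_refl g (rs_refl g x) = x"
proof -
  assume g: "g \<noteq> 0"
  have gg: "g \<bullet> g \<noteq> 0" using g by auto
  have "rs_refl g x \<bullet> g = - (x \<bullet> g)" unfolding rs_refl_def using gg
    by (simp add: inner_diff_left)
  then show ?thesis unfolding rs_refl_def[of g "rs_refl g x"] using gg
    by (simp add: rs_refl_def)
qed

lemma long_refl: "long \<Phi> x \<Longrightarrow> g \<in> \<Phi> \<Longrightarrow> long \<Phi> (rs_refl g x)"
  proof -
  assume x: "long \<Phi> x" and g: "g \<in> \<Phi>"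
  have "g \<noteq> 0" using g zPhi by auto
  then show ?thesis using x g reflPhi refl_inner[of g x x] unfolding long_def by auto
qed

lemma long_neg: "long \<Phi> x \<Longrightarrow> long \<Phi> (- x)"
  unfolding long_def using negPhi by auto

lemma strict_cs:
  assumes a: "a \<in> \<Phi>" and b: "b \<in> \<Phi>" and ne: "b \<noteq> a" "b \<noteq> - a"
  shows "(a \<bullet> b)^2 < (a \<bullet> a) * (b \<bullet> b)"
proof -
  have le: "\<bar>a \<bullet> b\<bar> \<le> norm a * norm b" by (rule Cauchy_Schwarz_ineq2)
  have na: "norm a > 0" using a zPhi by auto
  have neq: "\<bar>a \<bullet> b\<bar> \<noteq> norm a * norm b"
  proof
    assume "\<bar>a \<bullet> b\<bar> = norm a * norm b"
    then have "norm a *\<^sub>R b = norm b *\<^sub>R a \<or> norm a *\<^sub>R b = - norm b *\<^sub>R a"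
      using norm_cauchy_schwarz_abs_eq by blast
    then obtain t where t: "b = t *\<^sub>R a" "\<bar>t\<bar> = norm b / norm a"
    proof
      assume "norm a *\<^sub>R b = norm b *\<^sub>R a"
      then have "inverse (norm a) *\<^sub>R (norm a *\<^sub>R b) = inverse (norm a) *\<^sub>R (norm b *\<^sub>R a)" by simp
      then have "b = (norm b / norm a) *\<^sub>R a" using na by (simp add: divide_inverse_commute)
      then show thesis using that[of "norm b / norm a"] by auto
    next
      assume "norm a *\<^sub>R b = - norm b *\<^sub>R a"
      then have "inverse (norm a) *\<^sub>R (norm a *\<^sub>R b) = inverse (norm a) *\<^sub>R (- norm b *\<^sub>R a)" by simp
      then have "b = (- norm b / norm a) *\<^sub>R a" using na by (simp add: divide_inverse_commute)
      then show thesis using that[of "- norm b / norm a"] by auto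
    qed
    then have "t = 1 \<or> t = -1" using red b a unfolding rs_reduced_def by auto
    then show False using t ne by auto
  qed
  have "\<bar>a \<bullet> b\<bar> < norm a * norm b" using le neq by auto
  then have "\<bar>a \<bullet> b\<bar>^2 < (norm a * norm b)^2"
    by (intro power_strict_mono) auto
  then show ?thesis by (simp add: power_mult_distrib power2_norm_eq_inner)
qed

end

context RS begin

lemma ratio:
  assumes r: "\<rho> \<in> \<Phi>" and g: "\<gamma> \<in> \<Phi>" and nz: "\<rho> \<bullet> \<gamma> \<noteq> 0" and ne: "\<gamma> \<noteq> \<rho>" "\<gamma> \<noteq> - \<rho>"
    and le: "\<gamma> \<bullet> \<gamma> \<le> \<rho> \<bullet> \<rho>"
  shows "\<bar>cart \<gamma> \<rho>\<bar> = 1" "cart \<rho> \<gamma> = cart \<gamma> \<rho> * (\<rho> \<bullet> \<rho>) / (\<gamma> \<bullet> \<gamma>)" "\<bar>cart \<rho> \<gamma>\<bar> \<le> 3"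
proof -
  define A where "A = \<rho> \<bullet> \<rho>"
  define B where "B = \<gamma> \<bullet> \<gamma>"
  define t where "t = \<rho> \<bullet> \<gamma>"
  have A: "A > 0" using len_pos r A_def by auto
  have B: "B > 0" using len_pos g B_def by auto
  have p: "cart \<rho> \<gamma> = 2 * t / B" unfolding cart_def t_def B_def ..
  have q: "cart \<gamma> \<rho> = 2 * t / A" unfolding cart_def t_def A_def by (simp add: inner_commute)
  have tt: "t^2 < A * B" using strict_cs[OF r g ne(1) ne(2)] unfolding t_def A_def B_def .
  have pq: "cart \<rho> \<gamma> * cart \<gamma> \<rho> = 4 * t^2 / (A * B)" unfolding p q by (simp add: power2_eq_square)
  have pq4: "cart \<rho> \<gamma> * cart \<gamma> \<rho> < 4" unfolding pq using tt A B by (simp add: divide_less_eq)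
  have pqpos: "cart \<rho> \<gamma> * cart \<gamma> \<rho> > 0" unfolding pq using A B nz t_def by simp
  show eq2: "cart \<rho> \<gamma> = cart \<gamma> \<rho> * (\<rho> \<bullet> \<rho>) / (\<gamma> \<bullet> \<gamma>)"
    unfolding p q A_def[symmetric] B_def[symmetric] using A by simp
  have AB: "A / B \<ge> 1" using le A B unfolding A_def B_def by simp
  have absp: "\<bar>cart \<rho> \<gamma>\<bar> = \<bar>cart \<gamma> \<rho>\<bar> * (A / B)" unfolding eq2 A_def B_def using A B
    by (simp add: abs_mult A_def B_def)
  have pge: "\<bar>cart \<rho> \<gamma>\<bar> \<ge> \<bar>cart \<gamma> \<rho>\<bar>" unfolding absp
    using mult_left_mono[OF AB abs_ge_zero[of "cart \<gamma> \<rho>"]] by simp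
  have qi: "cart \<gamma> \<rho> \<in> \<int>" using intPhi[OF r g] .
  then obtain i where i: "cart \<gamma> \<rho> = of_int i" by (auto elim: Ints_cases)
  have i0: "i \<noteq> 0" using pqpos i by auto
  have prod: "\<bar>cart \<rho> \<gamma>\<bar> * \<bar>cart \<gamma> \<rho>\<bar> < 4" using pq4 pqpos by (simp add: abs_mult[symmetric])
  have "\<bar>i\<bar> = 1"
  proof (rule ccontr)
    assume "\<bar>i\<bar> \<noteq> 1"
    then have "\<bar>i\<bar> \<ge> 2" using i0 by linarith
    then have q2: "\<bar>cart \<gamma> \<rho>\<bar> \<ge> 2" using i by simp
    then have "\<bar>cart \<rho> \<gamma>\<bar> \<ge> 2" using pge by linarith
    then have "\<bar>cart \<rho> \<gamma>\<bar> * \<bar>cart \<gamma> \<rho>\<bar> \<ge> 2 * 2" using q2 by (intro mult_mono) auto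
    then show False using prod by simp
  qed
  then show q1: "\<bar>cart \<gamma> \<rho>\<bar> = 1" using i by simp
  show "\<bar>cart \<rho> \<gamma>\<bar> \<le> 3"
  proof -
    have "\<bar>cart \<rho> \<gamma>\<bar> < 4" using prod q1 by simp
    moreover have "cart \<rho> \<gamma> \<in> \<int>" using intPhi[OF g r] .
    then obtain j where j: "cart \<rho> \<gamma> = of_int j" by (auto elim: Ints_cases)
    ultimately have "real_of_int \<bar>j\<bar> < 4" by simp
    then have "\<bar>j\<bar> < 4" by simp
    then have "\<bar>j\<bar> \<le> 3" by simp
    then have "real_of_int \<bar>j\<bar> \<le> 3" by simp
    then show ?thesis using j by simp
  qed
qed

lemma nonorth:
  assumes S: "S \<subseteq> \<Phi>" "S \<noteq> {}" and cl: "\<And>g s. g \<in> \<Phi> \<Longrightarrow> s \<in> S \<Longrightarrow> rs_refl g s \<in> S"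
    and r: "\<rho> \<in> \<Phi>"
  shows "\<exists>s\<in>S. \<rho> \<bullet> s \<noteq> 0"
proof -
  define U where "U = span S"
  have dich: "g \<in> U \<or> (\<forall>s\<in>S. g \<bullet> s = 0)" if g: "g \<in> \<Phi>" for g
  proof (cases "\<forall>s\<in>S. g \<bullet> s = 0")
    case False
    then obtain s where s: "s \<in> S" "g \<bullet> s \<noteq> 0" by auto
    have gg: "g \<bullet> g \<noteq> 0" using g zPhi by auto
    have cs: "cart s g \<noteq> 0" unfolding cart_def using s gg by (simp add: inner_commute)
    have "rs_refl g s = s - cart s g *\<^sub>R g" by (rule refl_eq)
    then have "g = (1 / cart s g) *\<^sub>R (s - rs_refl g s)" using cs by simp
    moreover have "s - rs_refl g s \<in> U" unfolding U_def using s cl[OF g s(1)]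
      by (intro span_diff span_base) auto
    ultimately have "g \<in> U" unfolding U_def using span_scale[of "s - rs_refl g s" S "1 / cart s g"] by simp
    then show ?thesis by auto
  qed auto
  have "\<Phi> \<subseteq> U"
  proof (rule ccontr)
    assume "\<not> \<Phi> \<subseteq> U"
    define A where "A = \<Phi> \<inter> U"
    define B where "B = \<Phi> - U"
    have "A \<noteq> {}" using S unfolding A_def U_def by (auto intro: span_base)
    moreover have "B \<noteq> {}" using \<open>\<not> \<Phi> \<subseteq> U\<close> unfolding B_def by auto
    moreover have "A \<union> B = \<Phi>" unfolding A_def B_def by auto
    moreover have "A \<inter> B = {}" unfolding A_def B_def by auto
    moreover have "\<forall>a\<in>A. \<forall>b\<in>B. a \<bullet> b = 0"
    proof (intro ballI)
      fix a b assume a: "a \<in> A" and b: "b \<in> B"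
      have "\<forall>s\<in>S. b \<bullet> s = 0" using dich[of b] b unfolding B_def by auto
      then have h2: "\<And>y. y \<in> S \<Longrightarrow> orthogonal b y" by (auto simp: orthogonal_def)
      have h1: "a \<in> span S" using a unfolding A_def U_def by auto
      have "orthogonal b a" by (rule orthogonal_to_span[OF h1 h2])
      then show "a \<bullet> b = 0" by (simp add: orthogonal_def inner_commute)
    qed
    ultimately have "\<exists>A B. A \<noteq> {} \<and> B \<noteq> {} \<and> A \<union> B = \<Phi> \<and> A \<inter> B = {} \<and>
            (\<forall>a\<in>A. \<forall>b\<in>B. a \<bullet> b = 0)" by (intro exI[of _ A] exI[of _ B]) simp
    then show False using irr unfolding irreducible_rs_def by simp
  qed
  show ?thesis
  proof (rule ccontr)
    assume "\<not> ?thesis"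
    then have h2: "\<And>s. s \<in> S \<Longrightarrow> orthogonal \<rho> s" by (auto simp: orthogonal_def)
    have h1: "\<rho> \<in> span S" using \<open>\<Phi> \<subseteq> U\<close> r unfolding U_def by auto
    have "orthogonal \<rho> \<rho>" by (rule orthogonal_to_span[OF h1 h2])
    then show False using r zPhi by (auto simp: orthogonal_def)
  qed
qed

lemma nonorth_len:
  assumes "\<sigma> \<in> \<Phi>" "\<rho> \<in> \<Phi>" shows "\<exists>s\<in>\<Phi>. s \<bullet> s = \<sigma> \<bullet> \<sigma> \<and> \<rho> \<bullet> s \<noteq> 0"
proof -
  have "\<exists>s\<in>{s\<in>\<Phi>. s \<bullet> s = \<sigma> \<bullet> \<sigma>}. \<rho> \<bullet> s \<noteq> 0"
  proof (rule nonorth)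
    fix g s assume g: "g \<in> \<Phi>" and s: "s \<in> {s\<in>\<Phi>. s \<bullet> s = \<sigma> \<bullet> \<sigma>}"
    have "g \<noteq> 0" using g zPhi by auto
    then show "rs_refl g s \<in> {s\<in>\<Phi>. s \<bullet> s = \<sigma> \<bullet> \<sigma>}" using s reflPhi[OF g] refl_inner[of g s s] by auto
  qed (use assms in auto)
  then show ?thesis by auto
qed

lemma ratio_int:
  assumes r: "\<rho> \<in> \<Phi>" and g: "\<gamma> \<in> \<Phi>" and nz: "\<rho> \<bullet> \<gamma> \<noteq> 0" and le: "\<gamma> \<bullet> \<gamma> < \<rho> \<bullet> \<rho>"
  shows "(\<rho> \<bullet> \<rho>) / (\<gamma> \<bullet> \<gamma>) = 2 \<or> (\<rho> \<bullet> \<rho>) / (\<gamma> \<bullet> \<gamma>) = 3"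
proof -
  have ne: "\<gamma> \<noteq> \<rho>" "\<gamma> \<noteq> - \<rho>" using le by auto
  note R = ratio[OF r g nz ne less_imp_le[OF le]]
  have B: "\<gamma> \<bullet> \<gamma> > 0" using len_pos g by auto
  have eq: "\<bar>cart \<rho> \<gamma>\<bar> = (\<rho> \<bullet> \<rho>) / (\<gamma> \<bullet> \<gamma>)" using R(1,2) B
    by (simp add: abs_mult abs_divide)
  have gt: "(\<rho> \<bullet> \<rho>) / (\<gamma> \<bullet> \<gamma>) > 1" using le B by simp
  have "cart \<rho> \<gamma> \<in> \<int>" using intPhi[OF g r] .
  then obtain j where j: "cart \<rho> \<gamma> = of_int j" by (auto elim: Ints_cases)
  have "\<bar>j\<bar> \<le> 3" "\<bar>j\<bar> > 1" using R(3) eq gt j by auto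
  then have "\<bar>j\<bar> = 2 \<or> \<bar>j\<bar> = 3" by linarith
  then show ?thesis using eq j by auto
qed

lemma two_len: "g \<in> \<Phi> \<Longrightarrow> g \<bullet> g = m \<or> g \<bullet> g = M"
proof (rule ccontr)
  assume g: "g \<in> \<Phi>" and n: "\<not> (g \<bullet> g = m \<or> g \<bullet> g = M)"
  have lo: "m < g \<bullet> g" and hi: "g \<bullet> g < M" using len_bounds[OF g] n by auto
  obtain a where a: "long \<Phi> a" using ex_long by auto
  obtain b where b: "b \<in> \<Phi>" "b \<bullet> b = m" using ex_short by auto
  obtain a' where a': "a' \<in> \<Phi>" "a' \<bullet> a' = M" "g \<bullet> a' \<noteq> 0" using nonorth_len[of a g] a g unfolding long_def by auto
  obtain b' where b': "b' \<in> \<Phi>" "b' \<bullet> b' = m" "g \<bullet> b' \<noteq> 0" using nonorth_len[of b g] b g by auto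
  obtain a'' where a'': "a'' \<in> \<Phi>" "a'' \<bullet> a'' = M" "b \<bullet> a'' \<noteq> 0" using nonorth_len[of a b] a b unfolding long_def by auto
  have m0: "m > 0" by (rule m_pos)
  have r1: "M / (g \<bullet> g) \<ge> 2" using ratio_int[OF a'(1) g] a' hi by (auto simp: inner_commute)
  have r2: "(g \<bullet> g) / m \<ge> 2" using ratio_int[OF g b'(1)] b' lo by auto
  have r3: "M / m \<le> 3" using ratio_int[OF a''(1) b(1)] a'' b lo hi by (auto simp: inner_commute)
  have gg: "g \<bullet> g \<noteq> 0" using lo m0 by auto
  have "M / m = (M / (g \<bullet> g)) * ((g \<bullet> g) / m)" using gg m0 by (simp add: field_simps)
  also have "\<dots> \<ge> 2 * 2" using r1 r2 by (intro mult_mono) auto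
  finally show False using r3 by simp
qed

end

context RS begin

definition w :: "'a \<Rightarrow> real" where "w d = (d \<bullet> d) / M"
abbreviation "H \<equiv> htv \<Phi> \<Delta>"
definition h :: "'a \<Rightarrow> real" where "h x = (\<Sum>d\<in>\<Delta>. c x d)"

lemma w_pos: "d \<in> \<Delta> \<Longrightarrow> w d > 0"
  unfolding w_def using len_pos M_pos DsubPhi by auto

lemma htv_eq: "H x = (\<Sum>d\<in>\<Delta>. w d * c x d)"
  unfolding htv_def c_def
proof (rule sum.cong)
  fix d assume d: "d \<in> \<Delta>"
  then have dP: "d \<in> \<Phi>" using DsubPhi by auto
  have "(if long \<Phi> d then 1 else 1 / rr \<Phi>) = w d"
  proof (cases "long \<Phi> d")
    case True then show ?thesis unfolding w_def long_def using M_pos by auto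
  next
    case False
    then have "d \<bullet> d = m" using two_len[OF dP] dP unfolding long_def by auto
    then show ?thesis using False unfolding w_def rr_def by simp
  qed
  then show "(if long \<Phi> d then 1 else 1 / rr \<Phi>) * representation \<Delta> x d = w d * representation \<Delta> x d" by simp
qed simp

lemma H_add: "H (x + y) = H x + H y"
  unfolding htv_eq by (simp add: c_add distrib_left sum.distrib)
lemma H_diff: "H (x - y) = H x - H y"
  unfolding htv_eq by (simp add: c_diff right_diff_distrib sum_subtractf)
lemma H_scale: "H (a *\<^sub>R x) = a * H x"
  unfolding htv_eq by (simp add: c_scale sum_distrib_left mult.left_commute)
lemma H_neg: "H (- x) = - H x"
  unfolding htv_eq by (simp add: c_neg sum_negf)
lemma H_basis: "e \<in> \<Delta> \<Longrightarrow> H e = w e"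
  unfolding htv_eq using finD by (simp add: c_basis if_distrib sum.delta cong: if_cong)

lemma h_diff: "h (x - y) = h x - h y"
  unfolding h_def by (simp add: c_diff sum_subtractf)
lemma h_scale: "h (a *\<^sub>R x) = a * h x"
  unfolding h_def by (simp add: c_scale sum_distrib_left)
lemma h_basis: "e \<in> \<Delta> \<Longrightarrow> h e = 1"
  unfolding h_def using finD by (simp add: c_basis sum.delta cong: if_cong)

lemma posum: assumes "pos x" "\<And>d. d \<in> \<Delta> \<Longrightarrow> f d > 0"
  shows "(\<Sum>d\<in>\<Delta>. f d * c x d) > 0"
proof -
  have nn: "\<forall>d\<in>\<Delta>. 0 \<le> c x d" and x0: "x \<noteq> 0" using assms(1) pos_iff by auto
  obtain e where e: "e \<in> \<Delta>" "c x e \<noteq> 0" using nonzero_c[OF x0] by auto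
  have "(\<Sum>d\<in>\<Delta>. f d * c x d) \<ge> (\<Sum>d\<in>{e}. f d * c x d)"
    using e nn assms(2) finD by (intro sum_mono2) (auto intro: mult_nonneg_nonneg less_imp_le)
  moreover have "f e * c x e > 0" using e nn assms(2)[OF e(1)] by (simp add: order_less_le)
  ultimately show ?thesis by simp
qed

lemma h_pos: "pos x \<Longrightarrow> h x > 0"
  using posum[of x "\<lambda>_. 1"] unfolding h_def by simp
lemma H_pos: "pos x \<Longrightarrow> H x > 0"
  using posum[of x w] w_pos unfolding htv_eq by simp

lemma only_coord:
  assumes "g \<in> \<Phi>" "d \<in> \<Delta>" "\<And>e. e \<in> \<Delta> \<Longrightarrow> e \<noteq> d \<Longrightarrow> c g e = 0"
  shows "g = d \<or> g = - d"
proof -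
  have "g = c g d *\<^sub>R d"
    by (rule c_eqI) (use assms in \<open>auto simp: c_scale c_basis\<close>)
  moreover have "d \<in> \<Phi>" using assms DsubPhi by auto
  ultimately have "c g d = 1 \<or> c g d = -1" using red assms(1) unfolding rs_reduced_def by metis
  then show ?thesis using \<open>g = c g d *\<^sub>R d\<close> by auto
qed

lemma exists_acute:
  assumes "pos g" shows "\<exists>d\<in>\<Delta>. g \<bullet> d > 0"
proof (rule ccontr)
  assume "\<not> ?thesis"
  then have le: "\<forall>d\<in>\<Delta>. g \<bullet> d \<le> 0" by auto
  have nn: "\<forall>d\<in>\<Delta>. 0 \<le> c g d" and g0: "g \<noteq> 0" using assms pos_iff by auto
  have "g \<bullet> g = g \<bullet> (\<Sum>d\<in>\<Delta>. c g d *\<^sub>R d)" by (subst (2) expand) simp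
  also have "\<dots> = (\<Sum>d\<in>\<Delta>. c g d * (g \<bullet> d))" by (simp add: inner_sum_right)
  also have "\<dots> \<le> 0" using le nn by (intro sum_nonpos) (simp add: mult_nonneg_nonpos)
  finally show False using g0 inner_gt_zero_iff[of g] by linarith
qed

lemma Dpos: "\<forall>g\<in>\<Phi>. pos g \<longrightarrow> h g \<le> real n \<longrightarrow> (\<forall>e\<in>\<Delta>. c g e * (e \<bullet> e) / (g \<bullet> g) \<in> \<int>)"
proof (induction n)
  case 0
  then show ?case using h_pos by fastforce
next
  case (Suc n)
  show ?case
  proof (intro ballI impI)
    fix g e assume g: "g \<in> \<Phi>" and pg: "pos g" and hg: "h g \<le> real (Suc n)" and e: "e \<in> \<Delta>"
    show "c g e * (e \<bullet> e) / (g \<bullet> g) \<in> \<int>"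
    proof (cases "g \<in> \<Delta>")
      case True
      then show ?thesis using g len_pos[of g] by (auto simp: c_basis)
    next
      case False
      obtain d where d: "d \<in> \<Delta>" "g \<bullet> d > 0" using exists_acute[OF pg] by auto
      have dP: "d \<in> \<Phi>" using d DsubPhi by auto
      define p where "p = cart g d"
      have pZ: "p \<in> \<int>" unfolding p_def using intPhi[OF dP g] .
      have p0: "p > 0" unfolding p_def cart_def using d len_pos[OF dP] by simp
      have p1: "p \<ge> 1" using pZ p0 by (auto elim!: Ints_cases)
      define mu where "mu = rs_refl d g"
      have mu: "mu = g - p *\<^sub>R d" unfolding mu_def p_def by (rule refl_eq)
      have muP: "mu \<in> \<Phi>" unfolding mu_def using reflPhi[OF dP g] .
      have cmu: "c mu x = c g x - (if x = d then p else 0)" for x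
        unfolding mu using d by (simp add: c_diff c_scale c_basis)
      have nn: "\<forall>x\<in>\<Delta>. 0 \<le> c g x" using pg pos_iff by auto
      obtain f where f: "f \<in> \<Delta>" "f \<noteq> d" "c g f \<noteq> 0"
      proof (rule ccontr)
        assume "\<not> thesis"
        then have "\<And>x. x \<in> \<Delta> \<Longrightarrow> x \<noteq> d \<Longrightarrow> c g x = 0" using that by blast
        then have "g = d \<or> g = - d" using only_coord[OF g d(1)] by auto
        moreover have "g \<noteq> - d"
        proof
          assume "g = - d" then have "g \<bullet> d = - (d \<bullet> d)" by simp
          then show False using d(2) len_pos[OF dP] by linarith
        qed
        ultimately show False using False d by auto
      qed
      have "c mu f > 0" using f nn cmu[of f] by (simp add: order_less_le)
      then have "\<forall>x\<in>\<Delta>. 0 \<le> c mu x" using root_sign[OF muP] f(1) by force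
      moreover have "mu \<noteq> 0" using muP zPhi by auto
      ultimately have pmu: "pos mu" using pos_iff by auto
      have hmu: "h mu = h g - p" unfolding mu using d by (simp add: h_diff h_scale h_basis)
      then have "h mu \<le> real n" using hg p1 by simp
      then have IH: "c mu e * (e \<bullet> e) / (mu \<bullet> mu) \<in> \<int>" using Suc.IH muP pmu e by blast
      have dd: "d \<noteq> 0" using dP zPhi by auto
      have mm: "mu \<bullet> mu = g \<bullet> g" unfolding mu_def using refl_inner[OF dd] .
      have gg: "g \<bullet> g \<noteq> 0" using g zPhi by auto
      have "c g e * (e \<bullet> e) / (g \<bullet> g) = c mu e * (e \<bullet> e) / (mu \<bullet> mu) + (if e = d then cart d g else 0)"
      proof (cases "e = d")
        case True
        have "p * (d \<bullet> d) / (g \<bullet> g) = cart d g" unfolding p_def cart_def using len_pos[OF dP]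
          by (simp add: inner_commute)
        moreover have "c g e * (e \<bullet> e) / (g \<bullet> g) = (c g d - p) * (d \<bullet> d) / (g \<bullet> g) + p * (d \<bullet> d) / (g \<bullet> g)"
          using True gg by (simp add: field_simps)
        ultimately show ?thesis using True cmu[of e] mm by simp
      qed (use cmu[of e] mm in simp)
      moreover have "cart d g \<in> \<int>" using intPhi[OF g dP] .
      ultimately show ?thesis using IH by auto
    qed
  qed
qed

lemma Ddiv: assumes g: "g \<in> \<Phi>" and e: "e \<in> \<Delta>" shows "c g e * (e \<bullet> e) / (g \<bullet> g) \<in> \<int>"
proof (cases "pos g")
  case True
  obtain n :: nat where "h g \<le> real n" using real_arch_simple by blast
  then show ?thesis using Dpos[of n] g True e by blast
next
  case False
  have ng: "- g \<in> \<Phi>" using negPhi[OF g] .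
  have "pos (- g)" using neg_root[OF g False] g zPhi by (auto simp: pos_iff c_neg)
  obtain n :: nat where "h (- g) \<le> real n" using real_arch_simple by blast
  then have "c (- g) e * (e \<bullet> e) / (- g \<bullet> - g) \<in> \<int>" using Dpos[of n] ng \<open>pos (- g)\<close> e by blast
  then have "- (c g e * (e \<bullet> e) / (g \<bullet> g)) \<in> \<int>" by (simp add: c_neg)
  then show ?thesis by (metis Ints_minus minus_minus)
qed

lemma long_int: "long \<Phi> x \<Longrightarrow> d \<in> \<Delta> \<Longrightarrow> w d * c x d \<in> \<int>"
  using Ddiv[of x d] unfolding long_def w_def by (simp add: mult.commute)

lemma H_int: "long \<Phi> x \<Longrightarrow> H x \<in> \<int>"
  unfolding htv_eq using long_int by (intro Ints_sum) auto

end

context RS begin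

lemma level_iff: "level \<Phi> \<Delta> y = level \<Phi> \<Delta> x + 1 \<longleftrightarrow>
   H x - H y = 1 + (if pos y then 0 else 1) - (if pos x then 0 else 1)"
  unfolding level_def pos_def by auto

lemma rle_refl: "rle \<Delta> x x" by (simp add: rle_iff)
lemma rle_trans: "rle \<Delta> x y \<Longrightarrow> rle \<Delta> y z \<Longrightarrow> rle \<Delta> x z"
  unfolding rle_iff by (meson order_trans)

lemma neg_pos: "g \<in> \<Phi> \<Longrightarrow> \<not> pos g \<Longrightarrow> pos (- g)"
  using neg_root[of g] zPhi by (auto simp: pos_iff c_neg)

lemma pos_neg_not: "pos g \<Longrightarrow> \<not> pos (- g)"
proof
  assume "pos g" "pos (- g)"
  then have "\<forall>d\<in>\<Delta>. c g d = 0" by (auto simp: pos_iff c_neg) (metis neg_0_le_iff_le order_antisym)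
  then have "g = 0" using c_eqI[of g 0] by (auto simp: c_zero)
  then show False using \<open>pos g\<close> by (simp add: pos_iff)
qed

lemma between_pos: "rle \<Delta> a z \<Longrightarrow> pos a \<Longrightarrow> z \<in> \<Phi> \<Longrightarrow> pos z"
  unfolding pos_iff rle_iff using zPhi by (meson order_trans)

lemma between_neg: "rle \<Delta> z b \<Longrightarrow> \<not> pos b \<Longrightarrow> b \<in> \<Phi> \<Longrightarrow> z \<in> \<Phi> \<Longrightarrow> \<not> pos z"
proof
  assume a: "rle \<Delta> z b" "\<not> pos b" "b \<in> \<Phi>" "z \<in> \<Phi>" "pos z"
  have "\<forall>d\<in>\<Delta>. c b d \<le> 0" using neg_root a by auto
  then have "\<forall>d\<in>\<Delta>. c z d = 0" using a(1,5) unfolding rle_iff pos_iff by (meson order_antisym order_trans)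
  then have "z = 0" using c_eqI[of z 0] by (auto simp: c_zero)
  then show False using a zPhi by auto
qed

lemma H_rle: "rle \<Delta> x y \<Longrightarrow> H x \<le> H y"
  unfolding htv_eq
proof (rule sum_mono)
  fix d assume r: "rle \<Delta> x y" and d: "d \<in> \<Delta>"
  have "c x d \<le> c y d" using r d unfolding rle_iff by auto
  then show "w d * c x d \<le> w d * c y d" using w_pos[OF d] by (simp add: mult_left_mono)
qed

lemma H_rle_eq: "rle \<Delta> x y \<Longrightarrow> H x = H y \<Longrightarrow> x = y"
proof -
  assume r: "rle \<Delta> x y" and e: "H x = H y"
  have s0: "(\<Sum>d\<in>\<Delta>. w d * (c y d - c x d)) = 0" using e unfolding htv_eq
    by (simp add: right_diff_distrib sum_subtractf)
  have nn: "\<forall>d\<in>\<Delta>. 0 \<le> w d * (c y d - c x d)"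
  proof
    fix d assume d: "d \<in> \<Delta>"
    have "0 \<le> c y d - c x d" using r d unfolding rle_iff by auto
    then show "0 \<le> w d * (c y d - c x d)" using w_pos[OF d] by simp
  qed
  have z: "\<forall>d\<in>\<Delta>. w d * (c y d - c x d) = 0"
    using sum_nonneg_eq_0_iff[OF finD, of "\<lambda>d. w d * (c y d - c x d)"] nn s0 by blast
  have "\<forall>d\<in>\<Delta>. c x d = c y d"
  proof
    fix d assume d: "d \<in> \<Delta>"
    then have "w d * (c y d - c x d) = 0" using z by auto
    then show "c x d = c y d" using w_pos[OF d] by simp
  qed
  then show "x = y" using c_eqI by blast
qed

lemma edge_mono:
  assumes "edge \<Phi> \<Delta> x g y"
  shows "cart x g > 0 \<and> y = x - cart x g *\<^sub>R g \<and> rle \<Delta> y x"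
proof -
  have lx: "long \<Phi> x" and ly: "long \<Phi> y" and gP: "g \<in> \<Phi>" and pg: "pos g"
    and yr: "y = rs_refl g x" and lv: "level \<Phi> \<Delta> y = level \<Phi> \<Delta> x + 1"
    using assms unfolding edge_def positive_root_def pos_def by auto
  have y: "y = x - cart x g *\<^sub>R g" using yr refl_eq by simp
  have Hy: "H x - H y = cart x g * H g" unfolding y by (simp add: H_diff H_scale)
  have d: "H x - H y = 1 + (if pos y then 0 else 1) - (if pos x then 0 else 1)" using lv level_iff by blast
  have Hg: "H g > 0" using H_pos[OF pg] .
  have "cart x g * H g > 0"
  proof (rule ccontr)
    assume "\<not> ?thesis"
    then have "cart x g * H g \<le> 0" by simp
    then have "\<not> pos x" "pos y" "cart x g * H g = 0" using d Hy by (auto split: if_splits)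
    then have "y = x" using Hg y by simp
    then show False using \<open>\<not> pos x\<close> \<open>pos y\<close> by simp
  qed
  then have cp: "cart x g > 0" using Hg by (simp add: zero_less_mult_iff)
  have gn: "\<forall>d\<in>\<Delta>. 0 \<le> c g d" using pg pos_iff by auto
  have "\<forall>d\<in>\<Delta>. c y d \<le> c x d" unfolding y using cp gn by (auto simp: c_diff c_scale)
  then have "rle \<Delta> y x" unfolding rle_iff .
  then show ?thesis using cp y by simp
qed

definition R :: "'a set \<Rightarrow> 'a \<Rightarrow> 'a \<Rightarrow> bool" where "R G a b \<longleftrightarrow> (\<exists>g\<in>G. edge \<Phi> \<Delta> a g b)"

lemma path_R: "path_in \<Phi> \<Delta> G x y \<Longrightarrow> (R G)\<^sup>*\<^sup>* x y"
proof -
  assume "path_in \<Phi> \<Delta> G x y"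
  then obtain bs gs where p: "length bs = Suc (length gs)" "bs ! 0 = x" "bs ! length gs = y"
    "set gs \<subseteq> G" "\<forall>i < length gs. edge \<Phi> \<Delta> (bs ! i) (gs ! i) (bs ! Suc i)"
    unfolding path_in_def by blast
  have "i \<le> length gs \<Longrightarrow> (R G)\<^sup>*\<^sup>* x (bs ! i)" for i
  proof (induction i)
    case 0 then show ?case using p by simp
  next
    case (Suc i)
    then have "R G (bs ! i) (bs ! Suc i)" unfolding R_def using p(4,5) nth_mem[of i gs]
      by (metis Suc_le_lessD subsetD)
    then show ?case using Suc by (meson Suc_leD rtranclp.rtrancl_into_rtrancl)
  qed
  then show ?thesis using p by auto
qed

lemma R_path: "(R G)\<^sup>*\<^sup>* x y \<Longrightarrow> long \<Phi> x \<Longrightarrow> path_in \<Phi> \<Delta> G x y"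
proof (induction rule: rtranclp_induct)
  case base
  then show ?case unfolding path_in_def by (intro exI[of _ "[x]"] exI[of _ "[]"]) auto
next
  case (step y z)
  then obtain bs gs where p: "length bs = Suc (length gs)" "bs ! 0 = x" "bs ! length gs = y"
    "\<forall>i \<le> length gs. long \<Phi> (bs ! i)"
    "set gs \<subseteq> G" "\<forall>i < length gs. edge \<Phi> \<Delta> (bs ! i) (gs ! i) (bs ! Suc i)"
    unfolding path_in_def by blast
  obtain g where g: "g \<in> G" "edge \<Phi> \<Delta> y g z" using step(2) unfolding R_def by blast
  have lz: "long \<Phi> z" using g unfolding edge_def by auto
  show ?case unfolding path_in_def
  proof (rule exI[of _ "bs @ [z]"], rule exI[of _ "gs @ [g]"], intro conjI)
    show "length (bs @ [z]) = Suc (length (gs @ [g]))" using p by simp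
    show "(bs @ [z]) ! 0 = x" using p by (simp add: nth_append)
    show "(bs @ [z]) ! length (gs @ [g]) = z" using p by (simp add: nth_append)
    show "\<forall>i \<le> length (gs @ [g]). long \<Phi> ((bs @ [z]) ! i)"
      using p lz by (auto simp: nth_append le_Suc_eq)
    show "set (gs @ [g]) \<subseteq> G" using p g by auto
    show "\<forall>i < length (gs @ [g]). edge \<Phi> \<Delta> ((bs @ [z]) ! i) ((gs @ [g]) ! i) ((bs @ [z]) ! Suc i)"
    proof (intro allI impI)
      fix i assume i: "i < length (gs @ [g])"
      show "edge \<Phi> \<Delta> ((bs @ [z]) ! i) ((gs @ [g]) ! i) ((bs @ [z]) ! Suc i)"
      proof (cases "i < length gs")
        case True then show ?thesis using p by (simp add: nth_append)
      next
        case False then have "i = length gs" using i by simp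
        then show ?thesis using p g by (simp add: nth_append)
      qed
    qed
  qed
qed

lemma path_long: "path_in \<Phi> \<Delta> G x y \<Longrightarrow> long \<Phi> x"
  unfolding path_in_def by force

lemma path_iff: "path_in \<Phi> \<Delta> G x y \<longleftrightarrow> long \<Phi> x \<and> (R G)\<^sup>*\<^sup>* x y"
  using path_R R_path path_long by blast

lemma R_mono_rtr: "(R G)\<^sup>*\<^sup>* x y \<Longrightarrow> rle \<Delta> y x"
proof (induction rule: rtranclp_induct)
  case base then show ?case by (rule rle_refl)
next
  case (step y z)
  then show ?case unfolding R_def using edge_mono rle_trans by blast
qed

lemma crossing_gen:
  assumes "(R G)\<^sup>*\<^sup>* x y" "P x" "\<not> P y"
  shows "\<exists>a b. (R G)\<^sup>*\<^sup>* x a \<and> R G a b \<and> (R G)\<^sup>*\<^sup>* b y \<and> P a \<and> \<not> P b"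
  using assms
proof (induction rule: rtranclp_induct)
  case base then show ?case by simp
next
  case (step y z)
  show ?case
  proof (cases "P y")
    case True then show ?thesis using step by blast
  next
    case False
    then obtain a b where "(R G)\<^sup>*\<^sup>* x a" "R G a b" "(R G)\<^sup>*\<^sup>* b y" "P a" "\<not> P b" using step by blast
    then show ?thesis using step(2) by (meson rtranclp.rtrancl_into_rtrancl)
  qed
qed

end

context RS begin

lemma w_long: "long \<Phi> d \<Longrightarrow> w d = 1"
  unfolding w_def long_def using M_pos by simp

lemma pos_basis: "d \<in> \<Delta> \<Longrightarrow> pos d"
  using DsubPhi zPhi by (auto simp: pos_iff c_basis)

lemma long_simple:
  assumes lx: "long \<Phi> x" and px: "pos x" and Hx: "H x \<le> 1"
  shows "x \<in> \<Delta>"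
proof -
  have xP: "x \<in> \<Phi>" using lx long_def by auto
  have nn: "\<forall>d\<in>\<Delta>. 0 \<le> c x d" and x0: "x \<noteq> 0" using px pos_iff by auto
  obtain e where e: "e \<in> \<Delta>" "c x e \<noteq> 0" using nonzero_c[OF x0] by auto
  have ce: "c x e > 0" using e nn by (simp add: order_less_le)
  have tZ: "w e * c x e \<in> \<int>" using long_int[OF lx e(1)] .
  have tp: "w e * c x e > 0" using ce w_pos[OF e(1)] by simp
  have t1: "w e * c x e \<ge> 1" using tZ tp by (auto elim!: Ints_cases)
  have split: "H x = w e * c x e + (\<Sum>d\<in>\<Delta> - {e}. w d * c x d)"
    unfolding htv_eq using finD e(1) by (simp add: sum.remove)
  have rnn: "\<forall>d\<in>\<Delta> - {e}. 0 \<le> w d * c x d" using nn w_pos by (simp add: less_imp_le)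
  have "(\<Sum>d\<in>\<Delta> - {e}. w d * c x d) \<ge> 0" using rnn by (intro sum_nonneg) auto
  then have r0: "(\<Sum>d\<in>\<Delta> - {e}. w d * c x d) = 0" using split Hx t1 by linarith
  have "\<forall>d\<in>\<Delta> - {e}. w d * c x d = 0"
    using sum_nonneg_eq_0_iff[of "\<Delta> - {e}" "\<lambda>d. w d * c x d"] finD rnn r0 by blast
  then have z: "\<And>d. d \<in> \<Delta> \<Longrightarrow> d \<noteq> e \<Longrightarrow> c x d = 0"
  proof -
    fix d assume "\<forall>d\<in>\<Delta> - {e}. w d * c x d = 0" "d \<in> \<Delta>" "d \<noteq> e"
    then have "w d * c x d = 0" by auto
    then show "c x d = 0" using w_pos[OF \<open>d \<in> \<Delta>\<close>] by simp
  qed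
  have "x = e \<or> x = - e" using only_coord[OF xP e(1) z] .
  moreover have "x \<noteq> - e" using ce e(1) by (auto simp: c_neg c_basis)
  ultimately show ?thesis using e by auto
qed

lemma Ints_ge1: "(t::real) \<in> \<int> \<Longrightarrow> t > 0 \<Longrightarrow> t \<ge> 1"
  by (auto elim!: Ints_cases)

lemma crossing:
  assumes ed: "edge \<Phi> \<Delta> x g y" and px: "pos x" and py: "\<not> pos y"
  shows "x \<in> \<Delta> \<and> - y \<in> \<Delta> \<and> long \<Phi> x \<and> long \<Phi> (- y) \<and> x \<bullet> (- y) \<noteq> 0 \<and> (g \<in> \<Delta> \<longrightarrow> x = - y)"
proof -
  have lx: "long \<Phi> x" and ly: "long \<Phi> y" and gP: "g \<in> \<Phi>" and lv: "level \<Phi> \<Delta> y = level \<Phi> \<Delta> x + 1"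
    using ed unfolding edge_def positive_root_def by auto
  have yP: "y \<in> \<Phi>" using ly long_def by auto
  have lny: "long \<Phi> (- y)" using long_neg[OF ly] .
  have pny: "pos (- y)" using neg_pos[OF yP py] .
  have d2: "H x - H y = 2" using lv level_iff px py by simp
  have hx: "H x \<ge> 1" using Ints_ge1[OF H_int[OF lx] H_pos[OF px]] .
  have hy: "H (- y) \<ge> 1" using Ints_ge1[OF H_int[OF lny] H_pos[OF pny]] .
  have "H (- y) = - H y" by (rule H_neg)
  then have "H x \<le> 1" "H (- y) \<le> 1" using d2 hx hy by linarith+
  then have sD: "x \<in> \<Delta>" and tD: "- y \<in> \<Delta>" using long_simple lx px lny pny by auto
  define \<sigma> where "\<sigma> = x"
  define \<tau> where "\<tau> = - y"
  obtain t where t: "t > 0" "y = x - t *\<^sub>R g" "t = cart x g" using edge_mono[OF ed] by auto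
  have tZ: "t \<in> \<int>" using intPhi[OF gP] lx t(3) long_def by auto
  have st: "\<sigma> + \<tau> = t *\<^sub>R g" unfolding \<sigma>_def \<tau>_def using t(2) by simp
  have ne_imp: "\<sigma> \<noteq> \<tau> \<Longrightarrow> t * c g \<sigma> = 1 \<and> t * c g \<tau> = 1"
  proof -
    assume ne: "\<sigma> \<noteq> \<tau>"
    have sD': "\<sigma> \<in> \<Delta>" and tD': "\<tau> \<in> \<Delta>" using sD tD unfolding \<sigma>_def \<tau>_def by auto
    have "c (\<sigma> + \<tau>) \<sigma> = 1" "c (\<sigma> + \<tau>) \<tau> = 1" using ne sD' tD'
      by (auto simp only: c_add c_basis) auto
    then show ?thesis unfolding st by (simp add: c_scale)
  qed
  have dot: "x \<bullet> (- y) \<noteq> 0"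
  proof (cases "\<sigma> = \<tau>")
    case True then show ?thesis unfolding \<sigma>_def \<tau>_def using sD zPhi DsubPhi by auto
  next
    case False
    have e: "t * c g \<sigma> = 1" using ne_imp[OF False] by simp
    have cZ: "c g \<sigma> \<in> \<int>" using root_int[OF gP] .
    have "c g \<sigma> > 0"
    proof (rule ccontr)
      assume "\<not> 0 < c g \<sigma>"
      then have "t * c g \<sigma> \<le> 0" using t(1) by (simp add: mult_nonneg_nonpos)
      then show False using e by simp
    qed
    then have "c g \<sigma> \<ge> 1" using Ints_ge1 cZ by blast
    moreover have "t \<ge> 1" using Ints_ge1 tZ t(1) by blast
    ultimately have "t = 1"
    proof -
      assume c1: "c g \<sigma> \<ge> 1" and t1: "t \<ge> 1"
      have "t * 1 \<le> t * c g \<sigma>" using c1 t(1) by (intro mult_left_mono) auto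
      then show "t = 1" using e t1 by simp
    qed
    then have g: "g = \<sigma> + \<tau>" using st by simp
    have ss: "\<sigma> \<bullet> \<sigma> = M" "\<tau> \<bullet> \<tau> = M" using lx lny unfolding \<sigma>_def \<tau>_def long_def by auto
    have "g \<bullet> g \<le> M" using len_bounds[OF gP] by auto
    moreover have "g \<bullet> g = \<sigma> \<bullet> \<sigma> + 2 * (\<sigma> \<bullet> \<tau>) + \<tau> \<bullet> \<tau>" unfolding g
      by (simp add: inner_add_left inner_add_right inner_commute)
    ultimately have "\<sigma> \<bullet> \<tau> < 0" using ss M_pos by linarith
    then show ?thesis unfolding \<sigma>_def \<tau>_def by simp
  qed
  have "g \<in> \<Delta> \<longrightarrow> \<sigma> = \<tau>"
  proof (intro impI, rule ccontr)
    assume gD: "g \<in> \<Delta>" and ne: "\<sigma> \<noteq> \<tau>"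
    have "c g \<sigma> \<noteq> 0" "c g \<tau> \<noteq> 0" using ne_imp[OF ne] by auto
    then have "\<sigma> = g" "\<tau> = g" using gD by (auto simp: c_basis split: if_splits)
    then show False using ne by simp
  qed
  then show ?thesis using sD tD lx lny dot unfolding \<sigma>_def \<tau>_def by auto
qed

lemma nonacute: "s \<in> \<Delta> \<Longrightarrow> t \<in> \<Delta> \<Longrightarrow> s \<noteq> t \<Longrightarrow> s \<bullet> t \<le> 0"
proof (rule ccontr)
  assume s: "s \<in> \<Delta>" and t: "t \<in> \<Delta>" and ne: "s \<noteq> t" and "\<not> s \<bullet> t \<le> 0"
  then have st: "s \<bullet> t > 0" by simp
  have tP: "t \<in> \<Phi>" and sP: "s \<in> \<Phi>" using s t DsubPhi by auto
  have cp: "cart s t > 0" unfolding cart_def using st len_pos[OF tP] by simp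
  define mu where "mu = rs_refl t s"
  have muP: "mu \<in> \<Phi>" unfolding mu_def using reflPhi[OF tP sP] .
  have mu: "mu = s - cart s t *\<^sub>R t" unfolding mu_def by (rule refl_eq)
  have "c mu s = 1" "c mu t = - cart s t" unfolding mu using s t ne by (auto simp: c_diff c_scale c_basis)
  then show False using root_sign[OF muP] s t cp by force
qed

end

context RS begin

lemma refl_self: "g \<in> \<Phi> \<Longrightarrow> rs_refl g g = - g"
proof -
  assume g: "g \<in> \<Phi>"
  have "g \<bullet> g \<noteq> 0" using g zPhi by auto
  then show "rs_refl g g = - g" unfolding rs_refl_def by (simp add: scaleR_2)
qed

lemma one_coord_le: "x \<in> \<Phi> \<Longrightarrow> pos x \<Longrightarrow> rle \<Delta> x d \<Longrightarrow> d \<in> \<Delta> \<Longrightarrow> x = d"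
proof -
  assume x: "x \<in> \<Phi>" and px: "pos x" and r: "rle \<Delta> x d" and d: "d \<in> \<Delta>"
  have "\<And>e. e \<in> \<Delta> \<Longrightarrow> e \<noteq> d \<Longrightarrow> c x e = 0"
  proof -
    fix e assume e: "e \<in> \<Delta>" "e \<noteq> d"
    have "c x e \<le> c d e" using r e unfolding rle_iff by auto
    moreover have "0 \<le> c x e" using px e pos_iff by auto
    ultimately show "c x e = 0" using e d by (simp add: c_basis)
  qed
  then have "x = d \<or> x = - d" using only_coord[OF x d] by blast
  moreover have "\<not> pos (- d)" using pos_neg_not[OF pos_basis[OF d]] .
  ultimately show "x = d" using px by auto
qed

lemma one_coord_ge: "x \<in> \<Phi> \<Longrightarrow> \<not> pos x \<Longrightarrow> rle \<Delta> (- d) x \<Longrightarrow> d \<in> \<Delta> \<Longrightarrow> x = - d"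
proof -
  assume x: "x \<in> \<Phi>" and px: "\<not> pos x" and r: "rle \<Delta> (- d) x" and d: "d \<in> \<Delta>"
  have "\<And>e. e \<in> \<Delta> \<Longrightarrow> e \<noteq> d \<Longrightarrow> c x e = 0"
  proof -
    fix e assume e: "e \<in> \<Delta>" "e \<noteq> d"
    have "c (- d) e \<le> c x e" using r e unfolding rle_iff by auto
    moreover have "c x e \<le> 0" using neg_root[OF x px] e by auto
    ultimately show "c x e = 0" using e d by (simp add: c_basis c_neg)
  qed
  then have "x = d \<or> x = - d" using only_coord[OF x d] by blast
  moreover have "pos d" using pos_basis[OF d] .
  ultimately show "x = - d" using px by auto
qed

lemma descent_n:
  "\<forall>\<alpha> \<beta>. long \<Phi> \<alpha> \<longrightarrow> long \<Phi> \<beta> \<longrightarrow> rle \<Delta> \<alpha> \<beta> \<longrightarrow> (pos \<alpha> \<longleftrightarrow> pos \<beta>) \<longrightarrow>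
     H \<beta> - H \<alpha> = real n \<longrightarrow> (R \<Delta>)\<^sup>*\<^sup>* \<beta> \<alpha>"
proof (induction n)
  case 0
  show ?case
  proof (intro allI impI)
    fix \<alpha> \<beta> assume "rle \<Delta> \<alpha> \<beta>" "H \<beta> - H \<alpha> = real 0"
    then have "\<alpha> = \<beta>" using H_rle_eq by simp
    then show "(R \<Delta>)\<^sup>*\<^sup>* \<beta> \<alpha>" by simp
  qed
next
  case (Suc n)
  show ?case
  proof (intro allI impI)
    fix \<alpha> \<beta> assume la: "long \<Phi> \<alpha>" and lb: "long \<Phi> \<beta>" and r: "rle \<Delta> \<alpha> \<beta>"
      and sg: "pos \<alpha> \<longleftrightarrow> pos \<beta>" and hd: "H \<beta> - H \<alpha> = real (Suc n)"
    have aP: "\<alpha> \<in> \<Phi>" and bP: "\<beta> \<in> \<Phi>" and aa: "\<alpha> \<bullet> \<alpha> = M" and bb: "\<beta> \<bullet> \<beta> = M"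
      using la lb long_def by auto
    have ne: "\<alpha> \<noteq> \<beta>" using hd by auto
    define d where "d = \<beta> - \<alpha>"
    have cd: "\<forall>e\<in>\<Delta>. 0 \<le> c d e" using r unfolding rle_iff d_def by (auto simp: c_diff)
    have d0: "d \<noteq> 0" using ne d_def by auto
    obtain \<delta> where \<delta>: "\<delta> \<in> \<Delta>" "c d \<delta> > 0" "d \<bullet> \<delta> > 0"
    proof (rule ccontr)
      assume "\<not> thesis"
      then have nn: "\<forall>e\<in>\<Delta>. \<not> (c d e > 0 \<and> d \<bullet> e > 0)" using that by blast
      have le: "\<forall>e\<in>\<Delta>. c d e * (d \<bullet> e) \<le> 0"
      proof
        fix e assume e: "e \<in> \<Delta>"
        show "c d e * (d \<bullet> e) \<le> 0"
        proof (cases "c d e > 0")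
          case True then have "d \<bullet> e \<le> 0" using nn e by auto
          then show ?thesis using True by (simp add: mult_nonneg_nonpos)
        next
          case False then have "c d e = 0" using cd e by (simp add: order_less_le)
          then show ?thesis by simp
        qed
      qed
      have "d \<bullet> d = d \<bullet> (\<Sum>e\<in>\<Delta>. c d e *\<^sub>R e)" by (subst (2) expand) simp
      also have "\<dots> = (\<Sum>e\<in>\<Delta>. c d e * (d \<bullet> e))" by (simp add: inner_sum_right)
      also have "\<dots> \<le> 0" using le by (intro sum_nonpos) auto
      finally show False using d0 inner_gt_zero_iff[of d] by linarith
    qed
    have dP: "\<delta> \<in> \<Phi>" using \<delta>(1) DsubPhi by auto
    have d00: "\<delta> \<noteq> 0" using dP zPhi by auto
    have wd: "w \<delta> > 0" using w_pos[OF \<delta>(1)] .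
    define k where "k = 1 / w \<delta>"
    have kp: "k > 0" unfolding k_def using wd by simp
    have kw: "k * w \<delta> = 1" unfolding k_def using wd by simp
    have kM: "M / (\<delta> \<bullet> \<delta>) = k" unfolding k_def w_def by simp
    have dd: "\<delta> \<bullet> \<delta> \<le> M" using len_bounds[OF dP] by auto
    have pd: "pos \<delta>" using pos_basis[OF \<delta>(1)] .
    have cdd: "c d \<delta> = c \<beta> \<delta> - c \<alpha> \<delta>" unfolding d_def by (simp add: c_diff)
    have gap: "c \<beta> \<delta> - c \<alpha> \<delta> \<ge> k"
    proof -
      have "w \<delta> * c \<beta> \<delta> - w \<delta> * c \<alpha> \<delta> \<in> \<int>" using long_int[OF lb \<delta>(1)] long_int[OF la \<delta>(1)] by auto
      moreover have "w \<delta> * c \<beta> \<delta> - w \<delta> * c \<alpha> \<delta> > 0" using \<delta>(2) cdd wd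
        by (simp add: right_diff_distrib[symmetric])
      ultimately have "w \<delta> * (c \<beta> \<delta> - c \<alpha> \<delta>) \<ge> 1" using Ints_ge1 by (simp add: right_diff_distrib)
      then have "k * (w \<delta> * (c \<beta> \<delta> - c \<alpha> \<delta>)) \<ge> k * 1" using kp by (intro mult_left_mono) auto
      then show ?thesis using kw by (simp add: mult.assoc[symmetric])
    qed
    have edgeI: "edge \<Phi> \<Delta> x \<delta> y" if "long \<Phi> x" "long \<Phi> y" "y = rs_refl \<delta> x" "H x - H y = 1"
      "pos x \<longleftrightarrow> pos y" for x y
      unfolding edge_def positive_root_def using that dP pd level_iff[of y x] unfolding pos_def by auto
    show "(R \<Delta>)\<^sup>*\<^sup>* \<beta> \<alpha>"
    proof (cases "\<beta> \<bullet> \<delta> > 0")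
      case True
      have n1: "\<beta> \<noteq> \<delta>"
      proof
        assume "\<beta> = \<delta>"
        then have "pos \<alpha>" using sg pd by simp
        then have "\<alpha> = \<delta>" using one_coord_le[OF aP _ _ \<delta>(1)] r \<open>\<beta> = \<delta>\<close> by simp
        then show False using ne \<open>\<beta> = \<delta>\<close> by simp
      qed
      have n2: "\<delta> \<noteq> - \<beta>"
      proof
        assume "\<delta> = - \<beta>" then have "\<beta> \<bullet> \<delta> = - (\<beta> \<bullet> \<beta>)" by simp
        then show False using True bb M_pos by linarith
      qed
      have nz: "\<beta> \<bullet> \<delta> \<noteq> 0" using True by simp
      note Ra = ratio[OF bP dP nz n1[symmetric] n2]
      have c1: "cart \<delta> \<beta> > 0" unfolding cart_def using True bb M_pos by (simp add: inner_commute)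
      then have "cart \<delta> \<beta> = 1" using Ra(1) dd bb by auto
      then have cb: "cart \<beta> \<delta> = k" using Ra(2) bb kM dd by simp
      define \<beta>' where "\<beta>' = rs_refl \<delta> \<beta>"
      have b': "\<beta>' = \<beta> - k *\<^sub>R \<delta>" unfolding \<beta>'_def using refl_eq cb by simp
      have lb': "long \<Phi> \<beta>'" unfolding \<beta>'_def using long_refl[OF lb dP] .
      have b'P: "\<beta>' \<in> \<Phi>" using lb' long_def by auto
      have Hb': "H \<beta> - H \<beta>' = 1" unfolding b' using kw \<delta>(1) by (simp add: H_diff H_scale H_basis)
      have c': "c \<beta>' e = c \<beta> e - (if e = \<delta> then k else 0)" for e
        unfolding b' using \<delta>(1) by (simp add: c_diff c_scale c_basis)
      have r1: "rle \<Delta> \<alpha> \<beta>'" unfolding rle_iff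
      proof
        fix e assume e: "e \<in> \<Delta>"
        show "c \<alpha> e \<le> c \<beta>' e"
          using r e gap unfolding rle_iff c' by (cases "e = \<delta>") auto
      qed
      have r2: "rle \<Delta> \<beta>' \<beta>" unfolding rle_iff c' using kp by auto
      have sg': "pos \<beta>' \<longleftrightarrow> pos \<beta>"
        using between_pos[OF r1 _ b'P] between_neg[OF r2 _ bP b'P] sg by blast
      have ed: "edge \<Phi> \<Delta> \<beta> \<delta> \<beta>'" using edgeI[OF lb lb' \<beta>'_def Hb'] sg' by simp
      have "H \<beta>' - H \<alpha> = real n" using Hb' hd by simp
      then have "(R \<Delta>)\<^sup>*\<^sup>* \<beta>' \<alpha>" using Suc.IH la lb' r1 sg sg' by blast
      moreover have "R \<Delta> \<beta> \<beta>'" unfolding R_def using ed \<delta>(1) by blast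
      ultimately show ?thesis by (meson converse_rtranclp_into_rtranclp)
    next
      case False
      have ad: "\<alpha> \<bullet> \<delta> < 0" using False \<delta>(3) unfolding d_def by (simp add: inner_diff_left)
      have n1: "\<alpha> \<noteq> \<delta>"
      proof
        assume "\<alpha> = \<delta>" then have "\<alpha> \<bullet> \<delta> = \<alpha> \<bullet> \<alpha>" by simp
        then show False using ad aa M_pos by linarith
      qed
      have n2: "\<alpha> \<noteq> - \<delta>"
      proof
        assume a: "\<alpha> = - \<delta>"
        then have "\<not> pos \<alpha>" using pos_neg_not[OF pd] by simp
        then have "\<not> pos \<beta>" using sg by simp
        then have "\<beta> = - \<delta>" using one_coord_ge[OF bP _ _ \<delta>(1)] r a by simp
        then show False using ne a by simp
      qed
      have nz: "\<alpha> \<bullet> \<delta> \<noteq> 0" using ad by simp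
      note Ra = ratio[OF aP dP nz n1[symmetric]]
      have n2': "\<delta> \<noteq> - \<alpha>" using n2 by auto
      note Ra = Ra[OF n2']
      have c1: "cart \<delta> \<alpha> < 0" unfolding cart_def using ad aa M_pos by (simp add: inner_commute divide_neg_pos)
      then have "cart \<delta> \<alpha> = -1" using Ra(1) dd aa by auto
      then have ca: "cart \<alpha> \<delta> = - k" using Ra(2) aa kM dd by simp
      define \<alpha>' where "\<alpha>' = rs_refl \<delta> \<alpha>"
      have a': "\<alpha>' = \<alpha> + k *\<^sub>R \<delta>" unfolding \<alpha>'_def using refl_eq ca by simp
      have la': "long \<Phi> \<alpha>'" unfolding \<alpha>'_def using long_refl[OF la dP] .
      have a'P: "\<alpha>' \<in> \<Phi>" using la' long_def by auto
      have Ha': "H \<alpha>' - H \<alpha> = 1" unfolding a' using kw \<delta>(1) by (simp add: H_add H_scale H_basis)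
      have c': "c \<alpha>' e = c \<alpha> e + (if e = \<delta> then k else 0)" for e
        unfolding a' using \<delta>(1) by (simp add: c_add c_scale c_basis)
      have r1: "rle \<Delta> \<alpha>' \<beta>" unfolding rle_iff
      proof
        fix e assume e: "e \<in> \<Delta>"
        show "c \<alpha>' e \<le> c \<beta> e"
          using r e gap unfolding rle_iff c' by (cases "e = \<delta>") auto
      qed
      have r2: "rle \<Delta> \<alpha> \<alpha>'" unfolding rle_iff c' using kp by auto
      have sg': "pos \<alpha>' \<longleftrightarrow> pos \<alpha>"
        using between_pos[OF r2 _ a'P] between_neg[OF r1 _ bP a'P] sg by blast
      have bk: "\<alpha> = rs_refl \<delta> \<alpha>'" unfolding \<alpha>'_def using refl_invol[OF d00] by simp
      have ed: "edge \<Phi> \<Delta> \<alpha>' \<delta> \<alpha>" using edgeI[OF la' la bk Ha'] sg' by simp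
      have "H \<beta> - H \<alpha>' = real n" using Ha' hd by simp
      then have "(R \<Delta>)\<^sup>*\<^sup>* \<beta> \<alpha>'" using Suc.IH la' lb r1 sg sg' by blast
      moreover have "R \<Delta> \<alpha>' \<alpha>" unfolding R_def using ed \<delta>(1) by blast
      ultimately show ?thesis by (meson rtranclp.rtrancl_into_rtrancl)
    qed
  qed
qed

lemma descent:
  assumes "long \<Phi> \<alpha>" "long \<Phi> \<beta>" "rle \<Delta> \<alpha> \<beta>" "pos \<alpha> \<longleftrightarrow> pos \<beta>"
  shows "(R \<Delta>)\<^sup>*\<^sup>* \<beta> \<alpha>"
proof -
  have "H \<beta> - H \<alpha> \<in> \<int>" using H_int assms by auto
  then obtain i where i: "H \<beta> - H \<alpha> = of_int i" by (auto elim: Ints_cases)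
  have "H \<alpha> \<le> H \<beta>" using H_rle assms(3) .
  then have "i \<ge> 0" using i by simp
  then have "H \<beta> - H \<alpha> = real (nat i)" using i by simp
  then show ?thesis using descent_n[of "nat i"] assms by blast
qed

lemma R_sub: "(R \<Delta>)\<^sup>*\<^sup>* x y \<Longrightarrow> (R \<Phi>)\<^sup>*\<^sup>* x y"
proof (induction rule: rtranclp_induct)
  case base then show ?case by simp
next
  case (step y z)
  then have "R \<Phi> y z" unfolding R_def using DsubPhi by blast
  then show ?case using step by (meson rtranclp.rtrancl_into_rtrancl)
qed

end

context RS begin

lemma rless_neg: "rless \<Delta> x 0 \<Longrightarrow> \<not> pos x"
proof
  assume a: "rless \<Delta> x 0" "pos x"
  then have "\<forall>d\<in>\<Delta>. c x d = 0" unfolding rless_def rle_iff pos_iff by (auto simp: c_zero intro: order_antisym)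
  then have "x = 0" using c_eqI[of x 0] by (auto simp: c_zero)
  then show False using a pos_iff by auto
qed

lemma cross_path:
  assumes "(R G)\<^sup>*\<^sup>* \<beta> \<alpha>" "pos \<beta>" "\<not> pos \<alpha>"
  shows "\<exists>\<sigma> \<tau> g. \<sigma> \<in> \<Delta> \<and> \<tau> \<in> \<Delta> \<and> long \<Phi> \<sigma> \<and> long \<Phi> \<tau> \<and> \<sigma> \<bullet> \<tau> \<noteq> 0 \<and> g \<in> G \<and>
     (g \<in> \<Delta> \<longrightarrow> \<sigma> = \<tau>) \<and> rle \<Delta> \<sigma> \<beta> \<and> rle \<Delta> \<alpha> (- \<tau>)"
proof -
  obtain a b where ab: "(R G)\<^sup>*\<^sup>* \<beta> a" "R G a b" "(R G)\<^sup>*\<^sup>* b \<alpha>" "pos a" "\<not> pos b"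
    using crossing_gen[OF assms] by blast
  obtain g where g: "g \<in> G" "edge \<Phi> \<Delta> a g b" using ab(2) unfolding R_def by blast
  note cr = crossing[OF g(2) ab(4,5)]
  have "rle \<Delta> a \<beta>" using R_mono_rtr[OF ab(1)] .
  moreover have "rle \<Delta> \<alpha> (- (- b))" using R_mono_rtr[OF ab(3)] by simp
  ultimately show ?thesis using cr g(1) by blast
qed

lemma main:
  fixes J K :: "'a set" and n m :: "'a \<Rightarrow> int"
  assumes la: "long \<Phi> \<alpha>" and lb: "long \<Phi> \<beta>" and r: "rle \<Delta> \<alpha> \<beta>"
    and J: "J \<subseteq> \<Delta>" "J \<noteq> {}" and K: "K \<subseteq> \<Delta>" "K \<noteq> {}"
    and bs: "\<beta> = (\<Sum>\<sigma>\<in>J. of_int (n \<sigma>) *\<^sub>R \<sigma>)"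
    and ns: "(\<forall>\<sigma>\<in>J. n \<sigma> > 0) \<or> (\<forall>\<sigma>\<in>J. n \<sigma> < 0)"
    and as: "\<alpha> = (\<Sum>\<tau>\<in>K. of_int (m \<tau>) *\<^sub>R \<tau>)"
    and ms: "(\<forall>\<tau>\<in>K. m \<tau> > 0) \<or> (\<forall>\<tau>\<in>K. m \<tau> < 0)"
  shows "(rless \<Delta> 0 \<alpha> \<longrightarrow> rs_simple_path \<Phi> \<Delta> \<beta> \<alpha>) \<and>
         (rless \<Delta> \<alpha> 0 \<and> rless \<Delta> 0 \<beta> \<longrightarrow>
            (rs_simple_path \<Phi> \<Delta> \<beta> \<alpha> \<longleftrightarrow> (\<exists>\<delta>\<in>J \<inter> K. long \<Phi> \<delta>)) \<and>
            (rpath \<Phi> \<Delta> \<beta> \<alpha> \<longleftrightarrow>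
               (\<exists>\<sigma>\<in>J. \<exists>\<tau>\<in>K. long \<Phi> \<sigma> \<and> long \<Phi> \<tau> \<and> \<sigma> \<bullet> \<tau> \<noteq> 0))) \<and>
         (rless \<Delta> \<beta> 0 \<longrightarrow> rs_simple_path \<Phi> \<Delta> \<beta> \<alpha>)"
proof -
  have aP: "\<alpha> \<in> \<Phi>" and bP: "\<beta> \<in> \<Phi>" using la lb long_def by auto
  have cb: "c \<beta> e = (if e \<in> J then of_int (n e) else 0)" for e
    unfolding bs using c_sum[OF J(1)] .
  have ca: "c \<alpha> e = (if e \<in> K then of_int (m e) else 0)" for e
    unfolding as using c_sum[OF K(1)] .
  have n0: "e \<in> J \<Longrightarrow> n e \<noteq> 0" for e using ns by fastforce
  have m0: "e \<in> K \<Longrightarrow> m e \<noteq> 0" for e using ms by fastforce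
  have simple: "rs_simple_path \<Phi> \<Delta> \<beta> \<alpha> \<longleftrightarrow> (R \<Delta>)\<^sup>*\<^sup>* \<beta> \<alpha>"
    unfolding rs_simple_path_def path_iff using lb by simp
  have full: "rpath \<Phi> \<Delta> \<beta> \<alpha> \<longleftrightarrow> (R \<Phi>)\<^sup>*\<^sup>* \<beta> \<alpha>"
    unfolding rpath_def path_iff using lb by simp
  have p1: "rless \<Delta> 0 \<alpha> \<longrightarrow> rs_simple_path \<Phi> \<Delta> \<beta> \<alpha>"
  proof
    assume "rless \<Delta> 0 \<alpha>"
    then have pa: "pos \<alpha>" unfolding pos_def .
    then have "pos \<beta>" using between_pos[OF r pa bP] by simp
    then show "rs_simple_path \<Phi> \<Delta> \<beta> \<alpha>" unfolding simple using descent[OF la lb r] pa by simp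
  qed
  have p3: "rless \<Delta> \<beta> 0 \<longrightarrow> rs_simple_path \<Phi> \<Delta> \<beta> \<alpha>"
  proof
    assume "rless \<Delta> \<beta> 0"
    then have pb: "\<not> pos \<beta>" using rless_neg by blast
    then have "\<not> pos \<alpha>" using between_neg[OF r pb bP aP] by simp
    then show "rs_simple_path \<Phi> \<Delta> \<beta> \<alpha>" unfolding simple using descent[OF la lb r] pb by simp
  qed
  have p2: "rless \<Delta> \<alpha> 0 \<and> rless \<Delta> 0 \<beta> \<longrightarrow>
            (rs_simple_path \<Phi> \<Delta> \<beta> \<alpha> \<longleftrightarrow> (\<exists>\<delta>\<in>J \<inter> K. long \<Phi> \<delta>)) \<and>
            (rpath \<Phi> \<Delta> \<beta> \<alpha> \<longleftrightarrow>
               (\<exists>\<sigma>\<in>J. \<exists>\<tau>\<in>K. long \<Phi> \<sigma> \<and> long \<Phi> \<tau> \<and> \<sigma> \<bullet> \<tau> \<noteq> 0))"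
  proof
    assume "rless \<Delta> \<alpha> 0 \<and> rless \<Delta> 0 \<beta>"
    then have pa: "\<not> pos \<alpha>" and pb: "pos \<beta>" using rless_neg pos_def by auto
    have bnn: "\<forall>e\<in>\<Delta>. 0 \<le> c \<beta> e" using pb pos_iff by auto
    have anp: "\<forall>e\<in>\<Delta>. c \<alpha> e \<le> 0" using neg_root[OF aP pa] .
    have inJ: "\<sigma> \<in> J" if "\<sigma> \<in> \<Delta>" "rle \<Delta> \<sigma> \<beta>" for \<sigma>
    proof (rule ccontr)
      assume "\<sigma> \<notin> J"
      then have "c \<beta> \<sigma> = 0" using cb by simp
      moreover have "c \<sigma> \<sigma> \<le> c \<beta> \<sigma>" using that unfolding rle_iff by auto
      ultimately show False using that by (simp add: c_basis)
    qed
    have inK: "\<tau> \<in> K" if "\<tau> \<in> \<Delta>" "rle \<Delta> \<alpha> (- \<tau>)" for \<tau>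
    proof (rule ccontr)
      assume "\<tau> \<notin> K"
      then have "c \<alpha> \<tau> = 0" using ca by simp
      moreover have "c \<alpha> \<tau> \<le> c (- \<tau>) \<tau>" using that unfolding rle_iff by auto
      ultimately show False using that by (simp add: c_basis c_neg)
    qed
    have leJ: "rle \<Delta> \<sigma> \<beta>" if "\<sigma> \<in> J" for \<sigma>
    proof -
      have sD: "\<sigma> \<in> \<Delta>" using that J by auto
      have "c \<beta> \<sigma> = of_int (n \<sigma>)" using cb that by simp
      moreover have "c \<beta> \<sigma> \<ge> 0" using bnn sD by auto
      ultimately have "n \<sigma> \<ge> 1" using n0[OF that] by simp
      then have "c \<beta> \<sigma> \<ge> 1" using cb that by simp
      then show ?thesis unfolding rle_iff using bnn sD by (auto simp: c_basis)
    qed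
    have geK: "rle \<Delta> \<alpha> (- \<tau>)" if "\<tau> \<in> K" for \<tau>
    proof -
      have tD: "\<tau> \<in> \<Delta>" using that K by auto
      have "c \<alpha> \<tau> = of_int (m \<tau>)" using ca that by simp
      moreover have "c \<alpha> \<tau> \<le> 0" using anp tD by auto
      ultimately have "m \<tau> \<le> -1" using m0[OF that] by simp
      then have "c \<alpha> \<tau> \<le> -1" using ca that by simp
      then show ?thesis unfolding rle_iff using anp tD by (auto simp: c_basis c_neg)
    qed
    have via: "(R \<Delta>)\<^sup>*\<^sup>* \<beta> \<alpha>" if "\<delta> \<in> J" "\<delta> \<in> K" "long \<Phi> \<delta>" for \<delta>
    proof -
      have dD: "\<delta> \<in> \<Delta>" using that J by auto
      have dP: "\<delta> \<in> \<Phi>" using dD DsubPhi by auto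
      have pd: "pos \<delta>" using pos_basis[OF dD] .
      have "(R \<Delta>)\<^sup>*\<^sup>* \<beta> \<delta>" using descent[OF that(3) lb leJ[OF that(1)]] pd pb by simp
      moreover have "R \<Delta> \<delta> (- \<delta>)"
      proof -
        have "H \<delta> - H (- \<delta>) = 2" using H_neg[of \<delta>] H_basis[OF dD] w_long[OF that(3)] by simp
        moreover have "\<not> pos (- \<delta>)" using pos_neg_not[OF pd] .
        ultimately have lv: "level \<Phi> \<Delta> (- \<delta>) = level \<Phi> \<Delta> \<delta> + 1" using level_iff pd by simp
        have "edge \<Phi> \<Delta> \<delta> \<delta> (- \<delta>)" unfolding edge_def positive_root_def
          using that(3) long_neg[OF that(3)] dP pd lv refl_self[OF dP] unfolding pos_def by auto
        then show ?thesis unfolding R_def using dD by blast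
      qed
      moreover have "(R \<Delta>)\<^sup>*\<^sup>* (- \<delta>) \<alpha>"
        using descent[OF la long_neg[OF that(3)] geK[OF that(2)]] pa pos_neg_not[OF pd] by simp
      ultimately show ?thesis by (meson converse_rtranclp_into_rtranclp rtranclp_trans)
    qed
    have A: "rs_simple_path \<Phi> \<Delta> \<beta> \<alpha> \<longleftrightarrow> (\<exists>\<delta>\<in>J \<inter> K. long \<Phi> \<delta>)"
    proof
      assume "rs_simple_path \<Phi> \<Delta> \<beta> \<alpha>"
      then have "(R \<Delta>)\<^sup>*\<^sup>* \<beta> \<alpha>" using simple by simp
      then obtain \<sigma> \<tau> g where x: "\<sigma> \<in> \<Delta>" "\<tau> \<in> \<Delta>" "long \<Phi> \<sigma>" "g \<in> \<Delta>" "g \<in> \<Delta> \<longrightarrow> \<sigma> = \<tau>"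
        "rle \<Delta> \<sigma> \<beta>" "rle \<Delta> \<alpha> (- \<tau>)"
        using cross_path[of \<Delta> \<beta> \<alpha>] pb pa by blast
      then have "\<sigma> = \<tau>" by simp
      then show "\<exists>\<delta>\<in>J \<inter> K. long \<Phi> \<delta>" using inJ[OF x(1,6)] inK[OF x(2,7)] x(3) by auto
    next
      assume "\<exists>\<delta>\<in>J \<inter> K. long \<Phi> \<delta>"
      then show "rs_simple_path \<Phi> \<Delta> \<beta> \<alpha>" using via simple by auto
    qed
    have B: "rpath \<Phi> \<Delta> \<beta> \<alpha> \<longleftrightarrow> (\<exists>\<sigma>\<in>J. \<exists>\<tau>\<in>K. long \<Phi> \<sigma> \<and> long \<Phi> \<tau> \<and> \<sigma> \<bullet> \<tau> \<noteq> 0)"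
    proof
      assume "rpath \<Phi> \<Delta> \<beta> \<alpha>"
      then have "(R \<Phi>)\<^sup>*\<^sup>* \<beta> \<alpha>" using full by simp
      then obtain \<sigma> \<tau> where x: "\<sigma> \<in> \<Delta>" "\<tau> \<in> \<Delta>" "long \<Phi> \<sigma>" "long \<Phi> \<tau>" "\<sigma> \<bullet> \<tau> \<noteq> 0"
        "rle \<Delta> \<sigma> \<beta>" "rle \<Delta> \<alpha> (- \<tau>)"
        using cross_path[of \<Phi> \<beta> \<alpha>] pb pa by blast
      then show "\<exists>\<sigma>\<in>J. \<exists>\<tau>\<in>K. long \<Phi> \<sigma> \<and> long \<Phi> \<tau> \<and> \<sigma> \<bullet> \<tau> \<noteq> 0"
        using inJ[OF x(1,6)] inK[OF x(2,7)] by blast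
    next
      assume "\<exists>\<sigma>\<in>J. \<exists>\<tau>\<in>K. long \<Phi> \<sigma> \<and> long \<Phi> \<tau> \<and> \<sigma> \<bullet> \<tau> \<noteq> 0"
      then obtain \<sigma> \<tau> where st: "\<sigma> \<in> J" "\<tau> \<in> K" "long \<Phi> \<sigma>" "long \<Phi> \<tau>" "\<sigma> \<bullet> \<tau> \<noteq> 0" by blast
      show "rpath \<Phi> \<Delta> \<beta> \<alpha>"
      proof (cases "\<sigma> = \<tau>")
        case True
        then show ?thesis using via[of \<sigma>] st R_sub full by auto
      next
        case False
        have sD: "\<sigma> \<in> \<Delta>" and tD: "\<tau> \<in> \<Delta>" using st J K by auto
        have sP: "\<sigma> \<in> \<Phi>" and tP: "\<tau> \<in> \<Phi>" using sD tD DsubPhi by auto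
        have ss: "\<sigma> \<bullet> \<sigma> = M" and tt: "\<tau> \<bullet> \<tau> = M" using st long_def by auto
        have neg: "\<sigma> \<bullet> \<tau> < 0" using nonacute[OF sD tD False] st(5) by simp
        have ps: "pos \<sigma>" and pt: "pos \<tau>" using pos_basis sD tD by auto
        have n2: "\<tau> \<noteq> - \<sigma>" using pos_neg_not[OF ps] pt by auto
        note Ra = ratio[OF sP tP st(5) False[symmetric] n2]
        have "cart \<sigma> \<tau> = cart \<tau> \<sigma>" using Ra(2) ss tt M_pos by simp
        moreover have "cart \<sigma> \<tau> < 0" unfolding cart_def using neg tt M_pos by (simp add: divide_neg_pos)
        ultimately have cst: "cart \<sigma> \<tau> = -1" using Ra(1) tt ss by auto
        then have st2: "\<sigma> \<bullet> \<tau> = - M / 2" unfolding cart_def using tt M_pos by (simp add: field_simps)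
        define \<gamma> where "\<gamma> = \<sigma> + \<tau>"
        have gr: "\<gamma> = rs_refl \<tau> \<sigma>" unfolding \<gamma>_def using refl_eq[of \<tau> \<sigma>] cst by simp
        have gP: "\<gamma> \<in> \<Phi>" using gr reflPhi[OF tP sP] by simp
        have t0: "\<tau> \<noteq> 0" using tP zPhi by auto
        have gg: "\<gamma> \<bullet> \<gamma> = M" using gr refl_inner[OF t0, of \<sigma> \<sigma>] ss by simp
        have pg: "pos \<gamma>" unfolding pos_iff using ps pt gP zPhi unfolding \<gamma>_def pos_iff
          by (auto simp: c_add)
        have sg: "\<sigma> \<bullet> \<gamma> = M / 2" unfolding \<gamma>_def using ss st2 by (simp add: inner_add_right)
        have csg: "cart \<sigma> \<gamma> = 1" unfolding cart_def using sg gg M_pos by simp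
        have rt: "rs_refl \<gamma> \<sigma> = - \<tau>" using refl_eq[of \<gamma> \<sigma>] csg unfolding \<gamma>_def by simp
        have lv: "level \<Phi> \<Delta> (- \<tau>) = level \<Phi> \<Delta> \<sigma> + 1"
        proof -
          have "H \<sigma> - H (- \<tau>) = 2" using H_neg[of \<tau>] H_basis[OF sD] H_basis[OF tD]
              w_long[OF st(3)] w_long[OF st(4)] by simp
          then show ?thesis using level_iff ps pos_neg_not[OF pt] by simp
        qed
        have ed: "edge \<Phi> \<Delta> \<sigma> \<gamma> (- \<tau>)" unfolding edge_def positive_root_def
          using st(3) long_neg[OF st(4)] gP pg rt lv unfolding pos_def by auto
        have "(R \<Phi>)\<^sup>*\<^sup>* \<beta> \<sigma>" using R_sub descent[OF st(3) lb leJ[OF st(1)]] ps pb by simp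
        moreover have "R \<Phi> \<sigma> (- \<tau>)" unfolding R_def using ed gP by blast
        moreover have "(R \<Phi>)\<^sup>*\<^sup>* (- \<tau>) \<alpha>"
          using R_sub descent[OF la long_neg[OF st(4)] geK[OF st(2)]] pa pos_neg_not[OF pt] by simp
        ultimately show ?thesis using full by (meson converse_rtranclp_into_rtranclp rtranclp_trans)
      qed
    qed
    show "(rs_simple_path \<Phi> \<Delta> \<beta> \<alpha> \<longleftrightarrow> (\<exists>\<delta>\<in>J \<inter> K. long \<Phi> \<delta>)) \<and>
            (rpath \<Phi> \<Delta> \<beta> \<alpha> \<longleftrightarrow> (\<exists>\<sigma>\<in>J. \<exists>\<tau>\<in>K. long \<Phi> \<sigma> \<and> long \<Phi> \<tau> \<and> \<sigma> \<bullet> \<tau> \<noteq> 0))"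
      using A B by blast
  qed
  show ?thesis using p1 p2 p3 by blast
qed

end

theorem proposition1p11:
  fixes \<Phi> \<Delta> :: "'a::euclidean_space set" and \<alpha> \<beta> :: 'a
    and J K :: "'a set" and n m :: "'a \<Rightarrow> int"
  assumes "root_system \<Phi>" and "rs_reduced \<Phi>" and "irreducible_rs \<Phi>" and "rs_basis \<Phi> \<Delta>"
    and "long \<Phi> \<alpha>" and "long \<Phi> \<beta>" and "rle \<Delta> \<alpha> \<beta>"
    and "J \<subseteq> \<Delta>" and "J \<noteq> {}" and "K \<subseteq> \<Delta>" and "K \<noteq> {}"
    and "\<beta> = (\<Sum>\<sigma>\<in>J. of_int (n \<sigma>) *\<^sub>R \<sigma>)"
    and "(\<forall>\<sigma>\<in>J. n \<sigma> > 0) \<or> (\<forall>\<sigma>\<in>J. n \<sigma> < 0)"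
    and "\<alpha> = (\<Sum>\<tau>\<in>K. of_int (m \<tau>) *\<^sub>R \<tau>)"
    and "(\<forall>\<tau>\<in>K. m \<tau> > 0) \<or> (\<forall>\<tau>\<in>K. m \<tau> < 0)"
  shows "(rless \<Delta> 0 \<alpha> \<longrightarrow> rs_simple_path \<Phi> \<Delta> \<beta> \<alpha>) \<and>
         (rless \<Delta> \<alpha> 0 \<and> rless \<Delta> 0 \<beta> \<longrightarrow>
            (rs_simple_path \<Phi> \<Delta> \<beta> \<alpha> \<longleftrightarrow> (\<exists>\<delta>\<in>J \<inter> K. long \<Phi> \<delta>)) \<and>
            (rpath \<Phi> \<Delta> \<beta> \<alpha> \<longleftrightarrow>
               (\<exists>\<sigma>\<in>J. \<exists>\<tau>\<in>K. long \<Phi> \<sigma> \<and> long \<Phi> \<tau> \<and> \<sigma> \<bullet> \<tau> \<noteq> 0))) \<and>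
         (rless \<Delta> \<beta> 0 \<longrightarrow> rs_simple_path \<Phi> \<Delta> \<beta> \<alpha>)"
proof -
  interpret RS \<Phi> \<Delta> using assms(1-4) by unfold_locales
  show ?thesis using main[OF assms(5-15)] .
qed

end
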